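(* Let $0\le t_r\le n$ and suppose at most $f\le n-t_r$ of the $n$ nodes fail. Then the algorithm TLCR described in the context, where the $k$-th call to TLCR on a node constitutes that node's $k$-th logical time-step, implements a $\mathrm{TSB}(t_r,0,0)$ communication primitive.
   Context: Asynchronous network model. There are $n$ nodes numbered $1,\dots,n$; nodes may fail only by crashing permanently, after which they send no messages. A network-level Broadcast sends a message to all $n$ nodes (including the sender). Every message sent to a node that does not fail is eventually delivered after an arbitrary finite delay, and messages between each pair of nodes are delivered in the order sent. $\mathrm{Receive}()$ waits for and returns the next delivered message. Algorithm TLCR (node $i$, receive threshold $t_r$). Persistent state: a list $\vec R$ of sets, initially the one-element list $[\{\}]$; $\vec R_k$ denotes its $k$-th element. On a call $\mathrm{TLCR}(m)$: append $\{\}$ to $\vec R$ and let $s=|\vec R|$; network-broadcast $\langle i,m,s,\vec R_{s-1}\rangle$; while $|\vec R_s|<t_r$: receive $\langle j,m',s',R'\rangle$; if $s'=s$, set $\vec R_s\leftarrow\vec R_s\cup\{\langle j,m'\rangle\}$; else if $s'>s$, set $\vec R_s\leftarrow\vec R_s\cup R'$ (messages with $s'<s$ are ignored). Return $(\{m'\mid\langle j,m'\rangle\in\vec R_s\},\{\})$. Threshold synchronous broadcast. A primitive, called once per logical time-step by each non-failed node with a message $m$ and returning a pair $(R,B)$ of message sets, provides $\mathrm{TSB}(t_r,t_b,t_s)$ if: (lock-step synchrony) a call at step $s$ returns (completing step $s$) unless the node fails first; (receive threshold) if node $i$'s call at step $s$ returns $(R,B)$, there is $N_R\subseteq\{1,\dots,n\}$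 with $|N_R|\ge t_r$ such that $R$ is exactly the set of messages broadcast by the nodes of $N_R$ in step $s$; (broadcast threshold) there is $N_B\subseteq\{1,\dots,n\}$ with $|N_B|\ge t_b$ such that $B$ is exactly the set of messages broadcast by the nodes of $N_B$ in step $s$; (spread threshold) each $m'\in B$ returned to any node at step $s$ is contained in the receive sets $R$ returned in step $s$ to at least $t_s$ nodes (counting nodes that fail before completing step $s$ but would otherwise have received $m'$). *)

theory Defs
  imports Main
begin

text \<open>Nodes are the natural numbers 1..n. A network message has the form
  <i, m, s, R> (sender, payload, step number, a set of (node, payload) pairs).\<close>

datatype 'm msg = Msg (msnd: nat) (mval: 'm) (mstep: nat) (mset: "(nat \<times> 'm) set")

text \<open>Rs i      : the persistent list R of node i (0-indexed HOL list; R_k of the paper is Rs i ! (k-1)).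
  busy i    : node i is currently inside a TLCR call.
  crashed i : node i has crashed.
  chan j i  : FIFO queue of messages sent by j to i and not yet received by i.
  sent i k  : payload broadcast by node i in its k-th call (k-th logical time-step).
  ret i k   : the pair (R,B) returned by node i's k-th call.\<close>

record 'm sys =
  Rs      :: "nat \<Rightarrow> (nat \<times> 'm) set list"
  busy    :: "nat \<Rightarrow> bool"
  crashed :: "nat \<Rightarrow> bool"
  chan    :: "nat \<Rightarrow> nat \<Rightarrow> 'm msg list"
  sent    :: "nat \<Rightarrow> nat \<Rightarrow> 'm option"
  ret     :: "nat \<Rightarrow> nat \<Rightarrow> ('m set \<times> 'm set) option"

definition init_sys :: "'m sys" where
  "init_sys = \<lparr> Rs = (\<lambda>_. [{}]), busy = (\<lambda>_. False), crashed = (\<lambda>_. False),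
               chan = (\<lambda>_ _. []), sent = (\<lambda>_ _. None), ret = (\<lambda>_ _. None) \<rparr>"

datatype 'm act = Invoke nat 'm | Recv nat nat | Return nat | Crash nat

text \<open>Invoke i m: node i starts a call TLCR(m): append {} to R, s = |R|, broadcast
  <i,m,s,R_{s-1}> to all n nodes (atomically enqueued on every FIFO channel).
  Recv i j: inside the while loop (|R_s| < t_r), node i receives the next message
  delivered from j (arbitrary interleaving between senders = arbitrary delivery delays).\<close>

definition cur_step :: "'m sys \<Rightarrow> nat \<Rightarrow> nat" where
  "cur_step \<sigma> i = length (Rs \<sigma> i)"

definition cur_set :: "'m sys \<Rightarrow> nat \<Rightarrow> (nat \<times> 'm) set" where
  "cur_set \<sigma> i = last (Rs \<sigma> i)"

definition process :: "nat \<Rightarrow> 'm msg \<Rightarrow> (nat \<times> 'm) set \<Rightarrow> (nat \<times> 'm) set" where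
  "process s msg cur =
     (if mstep msg = s then insert (msnd msg, mval msg) cur
      else if mstep msg > s then cur \<union> mset msg
      else cur)"

definition inv_enabled :: "nat \<Rightarrow> 'm sys \<Rightarrow> nat \<Rightarrow> bool" where
  "inv_enabled n \<sigma> i \<longleftrightarrow> i \<in> {1..n} \<and> \<not> crashed \<sigma> i \<and> \<not> busy \<sigma> i"

definition recv_enabled :: "nat \<Rightarrow> nat \<Rightarrow> 'm sys \<Rightarrow> nat \<Rightarrow> nat \<Rightarrow> bool" where
  "recv_enabled n tr \<sigma> i j \<longleftrightarrow> i \<in> {1..n} \<and> \<not> crashed \<sigma> i \<and> busy \<sigma> i
      \<and> card (cur_set \<sigma> i) < tr \<and> chan \<sigma> j i \<noteq> []"

definition ret_enabled :: "nat \<Rightarrow> nat \<Rightarrow> 'm sys \<Rightarrow> nat \<Rightarrow> bool" where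
  "ret_enabled n tr \<sigma> i \<longleftrightarrow> i \<in> {1..n} \<and> \<not> crashed \<sigma> i \<and> busy \<sigma> i
      \<and> tr \<le> card (cur_set \<sigma> i)"

fun trans :: "nat \<Rightarrow> nat \<Rightarrow> 'm sys \<Rightarrow> 'm act \<Rightarrow> 'm sys \<Rightarrow> bool" where
  "trans n tr \<sigma> (Invoke i m) \<sigma>' \<longleftrightarrow> inv_enabled n \<sigma> i \<and>
     (let R' = Rs \<sigma> i @ [{}]; s = length R'; msg = Msg i m s (R' ! (s - 2)) in
      \<sigma>' = \<sigma>\<lparr> Rs := (Rs \<sigma>)(i := R'),
              busy := (busy \<sigma>)(i := True),
              chan := (\<lambda>a b. if a = i \<and> b \<in> {1..n} then chan \<sigma> a b @ [msg] else chan \<sigma> a b),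
              sent := (sent \<sigma>)(i := (sent \<sigma> i)(s - 1 := Some m)) \<rparr>)"
| "trans n tr \<sigma> (Recv i j) \<sigma>' \<longleftrightarrow> recv_enabled n tr \<sigma> i j \<and>
     \<sigma>' = \<sigma>\<lparr> Rs := (Rs \<sigma>)(i := butlast (Rs \<sigma> i) @
                       [process (cur_step \<sigma> i) (hd (chan \<sigma> j i)) (cur_set \<sigma> i)]),
             chan := (chan \<sigma>)(j := (chan \<sigma> j)(i := tl (chan \<sigma> j i))) \<rparr>"
| "trans n tr \<sigma> (Return i) \<sigma>' \<longleftrightarrow> ret_enabled n tr \<sigma> i \<and>
     \<sigma>' = \<sigma>\<lparr> busy := (busy \<sigma>)(i := False),
             ret := (ret \<sigma>)(i := (ret \<sigma> i)(cur_step \<sigma> i - 1 := Some (snd ` cur_set \<sigma> i, {}))) \<rparr>"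
| "trans n tr \<sigma> (Crash i) \<sigma>' \<longleftrightarrow> i \<in> {1..n} \<and> \<not> crashed \<sigma> i \<and>
     \<sigma>' = \<sigma>\<lparr> crashed := (crashed \<sigma>)(i := True) \<rparr>"

text \<open>An execution: an infinite sequence of states with actions (None = stuttering, so
  arbitrary finite delays are allowed), starting in the initial state, with weak fairness:
  a message queued to a live node waiting in the receive loop is eventually received
  (eventual delivery; FIFO per channel by construction); a live node whose loop condition
  has become false eventually returns; every live idle node eventually makes its next
  TLCR call (each non-failed node calls the primitive once per logical time-step).\<close>

definition tlcr_exec :: "nat \<Rightarrow> nat \<Rightarrow> (nat \<Rightarrow> 'm sys) \<Rightarrow> (nat \<Rightarrow> 'm act option) \<Rightarrow> bool" where
  "tlcr_exec n tr \<sigma> act \<longleftrightarrow>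
     \<sigma> 0 = init_sys \<and>
     (\<forall>t. case act t of None \<Rightarrow> \<sigma> (Suc t) = \<sigma> t | Some a \<Rightarrow> trans n tr (\<sigma> t) a (\<sigma> (Suc t))) \<and>
     (\<forall>i j t0. \<exists>t\<ge>t0. \<not> recv_enabled n tr (\<sigma> t) i j \<or> act t = Some (Recv i j)) \<and>
     (\<forall>i t0. \<exists>t\<ge>t0. \<not> ret_enabled n tr (\<sigma> t) i \<or> act t = Some (Return i)) \<and>
     (\<forall>i t0. \<exists>t\<ge>t0. \<not> inv_enabled n (\<sigma> t) i \<or> (\<exists>m. act t = Some (Invoke i m)))"

definition fails :: "(nat \<Rightarrow> 'm sys) \<Rightarrow> nat \<Rightarrow> bool" where
  "fails \<sigma> i \<longleftrightarrow> (\<exists>t. crashed (\<sigma> t) i)"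

definition invoked :: "(nat \<Rightarrow> 'm sys) \<Rightarrow> nat \<Rightarrow> nat \<Rightarrow> bool" where
  "invoked \<sigma> i k \<longleftrightarrow> (\<exists>t. sent (\<sigma> t) i k \<noteq> None)"

definition bcast :: "(nat \<Rightarrow> 'm sys) \<Rightarrow> nat \<Rightarrow> nat \<Rightarrow> 'm \<Rightarrow> bool" where
  "bcast \<sigma> j k m \<longleftrightarrow> (\<exists>t. sent (\<sigma> t) j k = Some m)"

definition returned :: "(nat \<Rightarrow> 'm sys) \<Rightarrow> nat \<Rightarrow> nat \<Rightarrow> 'm set \<Rightarrow> 'm set \<Rightarrow> bool" where
  "returned \<sigma> i k R B \<longleftrightarrow> (\<exists>t. ret (\<sigma> t) i k = Some (R, B))"

definition TSB :: "nat \<Rightarrow> nat \<Rightarrow> nat \<Rightarrow> nat \<Rightarrow> (nat \<Rightarrow> nat \<Rightarrow> bool)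
    \<Rightarrow> (nat \<Rightarrow> nat \<Rightarrow> 'm \<Rightarrow> bool) \<Rightarrow> (nat \<Rightarrow> nat \<Rightarrow> 'm set \<Rightarrow> 'm set \<Rightarrow> bool)
    \<Rightarrow> (nat \<Rightarrow> bool) \<Rightarrow> bool" where
  "TSB n tr tb ts iv bc rt fl \<longleftrightarrow>
     \<comment> \<open>lock-step synchrony\<close>
     (\<forall>i\<in>{1..n}. \<forall>k. iv i k \<longrightarrow> fl i \<or> (\<exists>R B. rt i k R B)) \<and>
     \<comment> \<open>receive threshold\<close>
     (\<forall>i k R B. rt i k R B \<longrightarrow>
        (\<exists>N \<subseteq> {1..n}. tr \<le> card N \<and> (\<forall>j\<in>N. \<exists>m. bc j k m) \<and> R = {m. \<exists>j\<in>N. bc j k m})) \<and>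
     \<comment> \<open>broadcast threshold\<close>
     (\<forall>k. \<exists>N \<subseteq> {1..n}. tb \<le> card N \<and> (\<forall>j\<in>N. \<exists>m. bc j k m) \<and>
        (\<forall>i R B. rt i k R B \<longrightarrow> B = {m. \<exists>j\<in>N. bc j k m})) \<and>
     \<comment> \<open>spread threshold (failed nodes are counted, over-approximating the counterfactual)\<close>
     (\<forall>i k R B m. rt i k R B \<and> m \<in> B \<longrightarrow>
        ts \<le> card {j \<in> {1..n}. (\<exists>R' B'. rt j k R' B' \<and> m \<in> R') \<or> fl j})"

end

theory Submission
  imports Defs
begin


definition msgs :: "'m sys \<Rightarrow> nat \<Rightarrow> 'm msg list" where
  "msgs \<sigma> j = map (\<lambda>s. Msg j (the (sent \<sigma> j (s - 1))) s (Rs \<sigma> j ! (s - 2))) [2..<Suc (length (Rs \<sigma> j))]"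

definition fin_st :: "'m sys \<Rightarrow> nat \<Rightarrow> nat \<Rightarrow> bool" where
  "fin_st \<sigma> j k \<longleftrightarrow> 1 \<le> k \<and> (Suc k < length (Rs \<sigma> j) \<or> (Suc k = length (Rs \<sigma> j) \<and> \<not> busy \<sigma> j))"

definition "inv1 \<sigma> \<longleftrightarrow> (\<forall>j. Rs \<sigma> j \<noteq> [])"
definition "inv2 n \<sigma> \<longleftrightarrow> (\<forall>j. j \<notin> {1..n} \<longrightarrow> length (Rs \<sigma> j) = 1)"
definition "inv3 \<sigma> \<longleftrightarrow> (\<forall>j k. sent \<sigma> j k \<noteq> None \<longleftrightarrow> (1 \<le> k \<and> k < length (Rs \<sigma> j)))"
definition "inv4 n \<sigma> \<longleftrightarrow> (\<forall>i k x. k < length (Rs \<sigma> i) \<longrightarrow> x \<in> Rs \<sigma> i ! k \<longrightarrow> fst x \<in> {1..n} \<and> sent \<sigma> (fst x) k = Some (snd x))"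
definition "inv5 tr \<sigma> \<longleftrightarrow> (\<forall>j k. fin_st \<sigma> j k \<longrightarrow> tr \<le> card (Rs \<sigma> j ! k))"
definition "inv6 \<sigma> \<longleftrightarrow> (\<forall>j. busy \<sigma> j \<longrightarrow> 2 \<le> length (Rs \<sigma> j))"
definition "inv7 n tr \<sigma> \<longleftrightarrow> (\<forall>i\<in>{1..n}. \<forall>j. \<exists>c \<le> length (msgs \<sigma> j). chan \<sigma> j i = drop c (msgs \<sigma> j) \<and> c \<le> length (Rs \<sigma> i)
        \<and> (c = length (Rs \<sigma> i) \<longrightarrow> busy \<sigma> i \<longrightarrow> tr \<le> card (cur_set \<sigma> i)))"
definition "inv8 \<sigma> \<longleftrightarrow> (\<forall>i k. ret \<sigma> i k \<noteq> None \<longleftrightarrow> fin_st \<sigma> i k)"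
definition "inv9 \<sigma> \<longleftrightarrow> (\<forall>i k R B. ret \<sigma> i k = Some (R, B) \<longrightarrow> R = snd ` (Rs \<sigma> i ! k) \<and> B = {})"

definition Inv :: "nat \<Rightarrow> nat \<Rightarrow> 'm sys \<Rightarrow> bool" where
  "Inv n tr \<sigma> \<longleftrightarrow> inv1 \<sigma> \<and> inv2 n \<sigma> \<and> inv3 \<sigma> \<and> inv4 n \<sigma> \<and> inv5 tr \<sigma> \<and> inv6 \<sigma> \<and> inv7 n tr \<sigma> \<and> inv8 \<sigma> \<and> inv9 \<sigma>"

lemma length_msgs: "length (msgs \<sigma> j) = length (Rs \<sigma> j) - 1"
  by (cases "length (Rs \<sigma> j)") (auto simp: msgs_def)

lemma nth_msgs: "c < length (msgs \<sigma> j) \<Longrightarrow>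
   msgs \<sigma> j ! c = Msg j (the (sent \<sigma> j (Suc c))) (Suc (Suc c)) (Rs \<sigma> j ! c)"
  unfolding length_msgs msgs_def by (subst nth_map) (auto simp del: upt_Suc)

lemma msgs_cong:
  assumes "length (Rs \<sigma>' j) = length (Rs \<sigma> j)"
    and "\<And>k. k + 2 \<le> length (Rs \<sigma> j) \<Longrightarrow> Rs \<sigma>' j ! k = Rs \<sigma> j ! k"
    and "sent \<sigma>' j = sent \<sigma> j"
  shows "msgs \<sigma>' j = msgs \<sigma> j"
  unfolding msgs_def assms(1,3)
proof (rule map_cong[OF refl])
  fix s assume "s \<in> set [2..<Suc (length (Rs \<sigma> j))]"
  then have "s - 2 + 2 \<le> length (Rs \<sigma> j)" by auto
  then show "Msg j (the (sent \<sigma> j (s - 1))) s (Rs \<sigma>' j ! (s - 2)) =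
         Msg j (the (sent \<sigma> j (s - 1))) s (Rs \<sigma> j ! (s - 2))" using assms(2) by metis
qed

lemma finite_sent_set:
  fixes n :: nat and f :: "nat \<Rightarrow> 'b option"
  shows "finite {x. fst x \<in> {1..n} \<and> f (fst x) = Some (snd x)}"
proof -
  have "{x. fst x \<in> {1..n} \<and> f (fst x) = Some (snd x)} \<subseteq> (\<lambda>j. (j, the (f j))) ` {1..n}"
  proof
    fix x assume "x \<in> {x. fst x \<in> {1..n} \<and> f (fst x) = Some (snd x)}"
    then have "fst x \<in> {1..n}" "x = (fst x, the (f (fst x)))" by auto
    then show "x \<in> (\<lambda>j. (j, the (f j))) ` {1..n}" by blast
  qed
  then show ?thesis by (meson finite_atLeastAtMost finite_imageI finite_subset)
qed

lemma InvD:
  assumes "Inv n tr \<sigma>"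
  shows InvD1: "\<forall>j. Rs \<sigma> j \<noteq> []"
   and InvD2: "\<forall>j. j \<notin> {1..n} \<longrightarrow> length (Rs \<sigma> j) = 1"
   and InvD3: "\<forall>j k. sent \<sigma> j k \<noteq> None \<longleftrightarrow> (1 \<le> k \<and> k < length (Rs \<sigma> j))"
   and InvD4: "\<forall>i k x. k < length (Rs \<sigma> i) \<longrightarrow> x \<in> Rs \<sigma> i ! k \<longrightarrow> fst x \<in> {1..n} \<and> sent \<sigma> (fst x) k = Some (snd x)"
   and InvD5: "\<forall>j k. fin_st \<sigma> j k \<longrightarrow> tr \<le> card (Rs \<sigma> j ! k)"
   and InvD6: "\<forall>j. busy \<sigma> j \<longrightarrow> 2 \<le> length (Rs \<sigma> j)"
   and InvD7: "\<forall>i\<in>{1..n}. \<forall>j. \<exists>c \<le> length (msgs \<sigma> j). chan \<sigma> j i = drop c (msgs \<sigma> j) \<and> c \<le> length (Rs \<sigma> i)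
        \<and> (c = length (Rs \<sigma> i) \<longrightarrow> busy \<sigma> i \<longrightarrow> tr \<le> card (cur_set \<sigma> i))"
   and InvD8: "\<forall>i k. ret \<sigma> i k \<noteq> None \<longleftrightarrow> fin_st \<sigma> i k"
   and InvD9: "\<forall>i k R B. ret \<sigma> i k = Some (R, B) \<longrightarrow> R = snd ` (Rs \<sigma> i ! k) \<and> B = {}"
  using assms unfolding Inv_def inv1_def inv2_def inv3_def inv4_def inv5_def inv6_def inv7_def inv8_def inv9_def by blast+

lemma Inv_finite:
  assumes "Inv n tr \<sigma>" "k < length (Rs \<sigma> i)"
  shows "finite (Rs \<sigma> i ! k)"
proof -
  have "Rs \<sigma> i ! k \<subseteq> {x. fst x \<in> {1..n} \<and> sent \<sigma> (fst x) k = Some (snd x)}"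
    using InvD4[OF assms(1)] assms(2) by auto
  then show ?thesis by (rule finite_subset[OF _ finite_sent_set])
qed

lemma cur_set_nth: "Rs \<sigma> i \<noteq> [] \<Longrightarrow> cur_set \<sigma> i = Rs \<sigma> i ! (length (Rs \<sigma> i) - 1)"
  by (simp add: cur_set_def last_conv_nth)

lemma Inv_finite_cur:
  assumes "Inv n tr \<sigma>"
  shows "finite (cur_set \<sigma> i)"
proof -
  have ne: "Rs \<sigma> i \<noteq> []" using InvD1[OF assms] by blast
  then have "length (Rs \<sigma> i) - 1 < length (Rs \<sigma> i)" by simp
  then show ?thesis using Inv_finite[OF assms] cur_set_nth[OF ne] by simp
qed

lemma Inv_init: "Inv n tr init_sys"
  by (simp add: Inv_def inv1_def inv2_def inv3_def inv4_def inv5_def inv6_def inv7_def inv8_def inv9_def init_sys_def msgs_def fin_st_def)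



lemmas inv_defs = inv1_def inv2_def inv3_def inv4_def inv5_def inv6_def inv7_def inv8_def inv9_def

lemma inv_invoke:
  assumes I: "Inv n tr \<sigma>" and t: "trans n tr \<sigma> (Invoke i m) \<sigma>'"
   and L: "L = length (Rs \<sigma> i)"
  shows "Inv n tr \<sigma>'"
proof -
  define msg where "msg = Msg i m (Suc L) (Rs \<sigma> i ! (L - 1))"
  have en: "inv_enabled n \<sigma> i" using t by simp
  have iin: "i \<in> {1..n}" and nb: "\<not> busy \<sigma> i" using en by (auto simp: inv_enabled_def)
  have ne: "Rs \<sigma> i \<noteq> []" using InvD1[OF I] by blast
  then have L1: "1 \<le> L" using L by (cases "Rs \<sigma> i") auto
  have sNone: "sent \<sigma> i L = None" using InvD3[OF I] L by (metis less_irrefl)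
  have nthX: "(Rs \<sigma> i @ [{}]) ! (Suc L - 2) = Rs \<sigma> i ! (L - 1)"
  proof -
    have "Suc L - 2 = L - 1" "L - 1 < length (Rs \<sigma> i)" using L1 L by auto
    then show ?thesis by (simp add: nth_append)
  qed
  have tt: "\<sigma>' = \<sigma>\<lparr>Rs := (Rs \<sigma>)(i := Rs \<sigma> i @ [{}]), busy := (busy \<sigma>)(i := True),
        chan := (\<lambda>a b. if a = i \<and> b \<in> {1..n} then chan \<sigma> a b @ [Msg i m (length (Rs \<sigma> i @ [{}])) ((Rs \<sigma> i @ [{}]) ! (length (Rs \<sigma> i @ [{}]) - 2))] else chan \<sigma> a b),
        sent := (sent \<sigma>)(i := (sent \<sigma> i)(length (Rs \<sigma> i @ [{}]) - 1 := Some m))\<rparr>"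
    using t by (simp only: trans.simps Let_def)
  have chan0: "chan \<sigma>' = (\<lambda>a b. if a = i \<and> b \<in> {1..n} then chan \<sigma> a b @ [Msg i m (length (Rs \<sigma> i @ [{}])) ((Rs \<sigma> i @ [{}]) ! (length (Rs \<sigma> i @ [{}]) - 2))] else chan \<sigma> a b)"
    using tt by simp
  have \<sigma>': "\<sigma>' = \<sigma>\<lparr>Rs := (Rs \<sigma>)(i := Rs \<sigma> i @ [{}]), busy := (busy \<sigma>)(i := True),
        chan := chan \<sigma>',
        sent := (sent \<sigma>)(i := (sent \<sigma> i)(L := Some m))\<rparr>"
    using tt L by simp
  have chanE: "\<And>a b. chan \<sigma>' a b = (if a = i \<and> b \<in> {1..n} then chan \<sigma> a b @ [msg] else chan \<sigma> a b)"
    unfolding chan0 using nthX L by (simp add: msg_def)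
  have RsI: "Rs \<sigma>' i = Rs \<sigma> i @ [{}]" and RsO: "\<And>x. x \<noteq> i \<Longrightarrow> Rs \<sigma>' x = Rs \<sigma> x"
    using tt L by auto
  have lenI: "length (Rs \<sigma>' i) = Suc L" using RsI L by simp
  have nthI: "\<And>k. k < L \<Longrightarrow> Rs \<sigma>' i ! k = Rs \<sigma> i ! k" using RsI L by (simp add: nth_append)
  have nthI2: "Rs \<sigma>' i ! L = {}" using RsI L by (simp add: nth_append)
  have sentE: "\<And>x k. sent \<sigma>' x k = (if x = i \<and> k = L then Some m else sent \<sigma> x k)"
    using tt L by auto
  have sent_ext: "\<And>x k v. sent \<sigma> x k = Some v \<Longrightarrow> sent \<sigma>' x k = Some v"
    using sentE sNone by auto
  have busyE: "\<And>x. busy \<sigma>' x = (x = i \<or> busy \<sigma> x)" using tt L by auto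
  have retE: "ret \<sigma>' = ret \<sigma>" using tt L by auto
  have curO: "\<And>x. x \<noteq> i \<Longrightarrow> cur_set \<sigma>' x = cur_set \<sigma> x" using RsO by (simp add: cur_set_def)
  have msgsO: "\<And>x. x \<noteq> i \<Longrightarrow> msgs \<sigma>' x = msgs \<sigma> x"
    using RsO sentE by (simp add: msgs_def)
  have msgsI: "msgs \<sigma>' i = msgs \<sigma> i @ [msg]"
  proof -
    have up: "[2..<Suc (Suc L)] = [2..<Suc L] @ [Suc L]" using L1 by simp
    have a: "map (\<lambda>s. Msg i (the (sent \<sigma>' i (s - 1))) s (Rs \<sigma>' i ! (s - 2))) [2..<Suc L]
           = map (\<lambda>s. Msg i (the (sent \<sigma> i (s - 1))) s (Rs \<sigma> i ! (s - 2))) [2..<Suc L]"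
    proof (rule map_cong[OF refl])
      fix s assume "s \<in> set [2..<Suc L]"
      then have "s - 1 \<noteq> L" "s - 2 < L" by auto
      then show "Msg i (the (sent \<sigma>' i (s - 1))) s (Rs \<sigma>' i ! (s - 2)) =
                 Msg i (the (sent \<sigma> i (s - 1))) s (Rs \<sigma> i ! (s - 2))" using sentE nthI by simp
    qed
    have b: "Msg i (the (sent \<sigma>' i (Suc L - 1))) (Suc L) (Rs \<sigma>' i ! (Suc L - 2)) = msg"
      using sentE nthI L1 by (simp add: msg_def)
    show ?thesis unfolding msgs_def lenI up using a b L by simp
  qed
  have finE: "\<And>x k. fin_st \<sigma>' x k = fin_st \<sigma> x k"
  proof -
    fix x k show "fin_st \<sigma>' x k = fin_st \<sigma> x k"
    proof (cases "x = i")
      case True then show ?thesis using lenI nb busyE L by (auto simp: fin_st_def)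
    next
      case False then show ?thesis using RsO busyE by (simp add: fin_st_def)
    qed
  qed
  have finL: "\<And>k. fin_st \<sigma> i k \<Longrightarrow> k < L" using L by (auto simp: fin_st_def)
  have i1: "inv1 \<sigma>'" unfolding inv1_def
  proof
    fix x show "Rs \<sigma>' x \<noteq> []" using InvD1[OF I] RsI RsO by (cases "x = i") auto
  qed
  have i2: "inv2 n \<sigma>'" using InvD2[OF I] RsO iin unfolding inv2_def by auto
  have i3: "inv3 \<sigma>'" unfolding inv3_def
  proof (intro allI)
    fix x k show "(sent \<sigma>' x k \<noteq> None) = (1 \<le> k \<and> k < length (Rs \<sigma>' x))"
    proof (cases "x = i")
      case True then show ?thesis using InvD3[OF I] sentE lenI L L1 by auto
    next
      case False then show ?thesis using InvD3[OF I] sentE RsO by auto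
    qed
  qed
  have i4: "inv4 n \<sigma>'" unfolding inv4_def
  proof (intro allI impI)
    fix x k e assume k: "k < length (Rs \<sigma>' x)" and e: "e \<in> Rs \<sigma>' x ! k"
    have "k < length (Rs \<sigma> x) \<and> e \<in> Rs \<sigma> x ! k"
    proof (cases "x = i")
      case True
      then have "k \<noteq> L" using e nthI2 by auto
      then show ?thesis using True k e lenI nthI L by auto
    next
      case False then show ?thesis using k e RsO by auto
    qed
    then show "fst e \<in> {1..n} \<and> sent \<sigma>' (fst e) k = Some (snd e)"
      using InvD4[OF I] sent_ext by blast
  qed
  have i5: "inv5 tr \<sigma>'" unfolding inv5_def
  proof (intro allI impI)
    fix x k assume f: "fin_st \<sigma>' x k"
    then have f0: "fin_st \<sigma> x k" using finE by blast
    have "Rs \<sigma>' x ! k = Rs \<sigma> x ! k"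
      using f0 finL nthI RsO by (cases "x = i") auto
    then show "tr \<le> card (Rs \<sigma>' x ! k)" using InvD5[OF I] f0 by simp
  qed
  have i6: "inv6 \<sigma>'" unfolding inv6_def
  proof (intro allI impI)
    fix x assume "busy \<sigma>' x"
    then show "2 \<le> length (Rs \<sigma>' x)" using InvD6[OF I] busyE lenI RsO L1 by (cases "x = i") auto
  qed
  have i7: "inv7 n tr \<sigma>'" unfolding inv7_def
  proof (intro ballI allI)
    fix b y assume b: "b \<in> {1..n}"
    obtain c where c: "c \<le> length (msgs \<sigma> y)" "chan \<sigma> y b = drop c (msgs \<sigma> y)" "c \<le> length (Rs \<sigma> b)"
        "c = length (Rs \<sigma> b) \<Longrightarrow> busy \<sigma> b \<Longrightarrow> tr \<le> card (cur_set \<sigma> b)"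
      using InvD7[OF I] b by blast
    have lenb: "length (Rs \<sigma> b) \<le> length (Rs \<sigma>' b)" using lenI L RsO by (cases "b = i") auto
    have cond: "c = length (Rs \<sigma>' b) \<longrightarrow> busy \<sigma>' b \<longrightarrow> tr \<le> card (cur_set \<sigma>' b)"
    proof (cases "b = i")
      case True
      then show ?thesis using c(3) lenI L by auto
    next
      case False
      then show ?thesis using c(4) RsO curO busyE by auto
    qed
    show "\<exists>c \<le> length (msgs \<sigma>' y). chan \<sigma>' y b = drop c (msgs \<sigma>' y) \<and> c \<le> length (Rs \<sigma>' b)
        \<and> (c = length (Rs \<sigma>' b) \<longrightarrow> busy \<sigma>' b \<longrightarrow> tr \<le> card (cur_set \<sigma>' b))"
    proof (cases "y = i")
      case True
      have "chan \<sigma>' y b = drop c (msgs \<sigma>' y)" using True chanE b c(1,2) msgsI by simp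
      moreover have "c \<le> length (msgs \<sigma>' y)" using True msgsI c(1) by simp
      ultimately show ?thesis using c(3) lenb cond by (intro exI[of _ c]) auto
    next
      case False
      have "chan \<sigma>' y b = drop c (msgs \<sigma>' y)" using False chanE c(2) msgsO by simp
      moreover have "c \<le> length (msgs \<sigma>' y)" using False msgsO c(1) by simp
      ultimately show ?thesis using c(3) lenb cond by (intro exI[of _ c]) auto
    qed
  qed
  have i8: "inv8 \<sigma>'" unfolding inv8_def using InvD8[OF I] retE finE by simp
  have i9: "inv9 \<sigma>'" unfolding inv9_def
  proof (intro allI impI)
    fix x k R B assume r: "ret \<sigma>' x k = Some (R, B)"
    then have f0: "fin_st \<sigma> x k" using InvD8[OF I] retE by auto
    have "Rs \<sigma>' x ! k = Rs \<sigma> x ! k"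
      using f0 finL nthI RsO by (cases "x = i") auto
    then show "R = snd ` (Rs \<sigma>' x ! k) \<and> B = {}" using InvD9[OF I] r retE by simp
  qed
  show ?thesis unfolding Inv_def using i1 i2 i3 i4 i5 i6 i7 i8 i9 by blast
qed


lemma msgs_butlast:
  assumes "Rs \<sigma> x \<noteq> []" "Rs \<sigma>' x = butlast (Rs \<sigma> x) @ [Y]" "sent \<sigma>' x = sent \<sigma> x"
  shows "msgs \<sigma>' x = msgs \<sigma> x"
proof (rule msgs_cong)
  show "length (Rs \<sigma>' x) = length (Rs \<sigma> x)" using assms(1,2) by simp
  show "sent \<sigma>' x = sent \<sigma> x" by fact
  fix k assume "k + 2 \<le> length (Rs \<sigma> x)"
  then have "k < length (butlast (Rs \<sigma> x))" by simp
  then show "Rs \<sigma>' x ! k = Rs \<sigma> x ! k" using assms(2) by (simp add: nth_append nth_butlast)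
qed

lemma inv_recv:
  assumes I: "Inv n tr \<sigma>" and en: "recv_enabled n tr \<sigma> i j"
  and \<sigma>': "\<sigma>' = \<sigma>\<lparr>Rs := (Rs \<sigma>)(i := butlast (Rs \<sigma> i) @ [process (cur_step \<sigma> i) (hd (chan \<sigma> j i)) (cur_set \<sigma> i)]),
                   chan := (chan \<sigma>)(j := (chan \<sigma> j)(i := tl (chan \<sigma> j i)))\<rparr>"
  shows "Inv n tr \<sigma>'"
proof -
  define L where "L = length (Rs \<sigma> i)"
  define cur where "cur = cur_set \<sigma> i"
  define new where "new = process (cur_step \<sigma> i) (hd (chan \<sigma> j i)) cur"
  have iin: "i \<in> {1..n}" and bz: "busy \<sigma> i" and lt: "card cur < tr" and ne: "chan \<sigma> j i \<noteq> []"
    using en by (auto simp: recv_enabled_def cur_def)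
  have L2: "2 \<le> L" using InvD6[OF I] bz by (auto simp: L_def)
  have neR: "\<And>x. Rs \<sigma> x \<noteq> []" using InvD1[OF I] by blast
  obtain c where c: "c \<le> length (msgs \<sigma> j)" "chan \<sigma> j i = drop c (msgs \<sigma> j)" "c \<le> L"
        "c = L \<Longrightarrow> tr \<le> card cur"
    using InvD7[OF I] iin bz unfolding L_def cur_def by blast
  have cL: "c \<noteq> L" using c(4) lt by fastforce
  have clt: "c < length (msgs \<sigma> j)" using c(1,2) ne by auto
  have lm: "length (msgs \<sigma> j) = length (Rs \<sigma> j) - 1" by (rule length_msgs)
  have hd: "hd (chan \<sigma> j i) = Msg j (the (sent \<sigma> j (Suc c))) (Suc (Suc c)) (Rs \<sigma> j ! c)"
    using clt c(2) by (simp add: hd_drop_conv_nth nth_msgs)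
  have jn: "j \<in> {1..n}" using InvD2[OF I] clt lm by force
  have sj: "sent \<sigma> j (Suc c) \<noteq> None" using InvD3[OF I] clt lm by auto
  have curL: "cur = Rs \<sigma> i ! (L - 1)" using cur_set_nth[OF neR] by (simp add: cur_def L_def)
  have cur_el: "\<And>x. x \<in> cur \<Longrightarrow> fst x \<in> {1..n} \<and> sent \<sigma> (fst x) (L - 1) = Some (snd x)"
  proof -
    fix x assume "x \<in> cur"
    moreover have "L - 1 < length (Rs \<sigma> i)" using L2 by (simp add: L_def)
    ultimately show "fst x \<in> {1..n} \<and> sent \<sigma> (fst x) (L - 1) = Some (snd x)"
      using InvD4[OF I] curL by blast
  qed
  have newE: "new = (if Suc (Suc c) = L then insert (j, the (sent \<sigma> j (Suc c))) cur
                     else if L < Suc (Suc c) then cur \<union> Rs \<sigma> j ! c else cur)"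
    by (simp add: new_def process_def hd cur_step_def L_def)
  have K1: "cur \<subseteq> new" using newE by auto
  have K2: "\<And>x. x \<in> new \<Longrightarrow> fst x \<in> {1..n} \<and> sent \<sigma> (fst x) (L - 1) = Some (snd x)"
  proof -
    fix x assume x: "x \<in> new"
    show "fst x \<in> {1..n} \<and> sent \<sigma> (fst x) (L - 1) = Some (snd x)"
    proof (cases "Suc (Suc c) = L")
      case True
      then have "x = (j, the (sent \<sigma> j (Suc c))) \<or> x \<in> cur" using x newE by auto
      then show ?thesis
      proof
        assume "x \<in> cur" then show ?thesis using cur_el by blast
      next
        assume "x = (j, the (sent \<sigma> j (Suc c)))"
        then show ?thesis using jn sj True by auto
      qed
    next
      case F1: False
      show ?thesis
      proof (cases "L < Suc (Suc c)")
        case True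
        then have cc: "c = L - 1" using c(3) cL by linarith
        have "c < length (Rs \<sigma> j)" using clt lm by linarith
        have "x \<in> cur \<or> x \<in> Rs \<sigma> j ! c" using x newE F1 True by auto
        then show ?thesis
        proof
          assume "x \<in> cur" then show ?thesis using cur_el by blast
        next
          assume "x \<in> Rs \<sigma> j ! c"
          then show ?thesis using InvD4[OF I] cc \<open>c < length (Rs \<sigma> j)\<close> by blast
        qed
      next
        case False
        then have "x \<in> cur" using x newE F1 by auto
        then show ?thesis using cur_el by blast
      qed
    qed
  qed
  have finnew: "finite new"
  proof -
    have "new \<subseteq> {x. fst x \<in> {1..n} \<and> sent \<sigma> (fst x) (L - 1) = Some (snd x)}" using K2 by auto
    then show ?thesis by (rule finite_subset[OF _ finite_sent_set])
  qed
  have K3: "Suc c = L \<Longrightarrow> tr \<le> card new"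
  proof -
    assume sc: "Suc c = L"
    then have nw: "new = cur \<union> Rs \<sigma> j ! c" using newE by auto
    have "fin_st \<sigma> j c" using sc L2 clt lm by (auto simp: fin_st_def)
    then have "tr \<le> card (Rs \<sigma> j ! c)" using InvD5[OF I] by blast
    also have "card (Rs \<sigma> j ! c) \<le> card new" using finnew nw by (intro card_mono) auto
    finally show ?thesis .
  qed
  have RsI: "Rs \<sigma>' i = butlast (Rs \<sigma> i) @ [new]" using \<sigma>' by (simp add: new_def cur_def)
  have RsO: "\<And>x. x \<noteq> i \<Longrightarrow> Rs \<sigma>' x = Rs \<sigma> x" using \<sigma>' by auto
  have lenI: "length (Rs \<sigma>' i) = L" using RsI neR[of i] by (simp add: L_def)
  have lenE: "\<And>x. length (Rs \<sigma>' x) = length (Rs \<sigma> x)" using lenI RsO L_def by metis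
  have nthI: "\<And>k. k < L - 1 \<Longrightarrow> Rs \<sigma>' i ! k = Rs \<sigma> i ! k"
    using RsI neR[of i] by (simp add: nth_append nth_butlast L_def)
  have nthI2: "Rs \<sigma>' i ! (L - 1) = new" using RsI neR[of i] by (simp add: nth_append L_def)
  have curI: "cur_set \<sigma>' i = new" using RsI by (simp add: cur_set_def)
  have curO: "\<And>x. x \<noteq> i \<Longrightarrow> cur_set \<sigma>' x = cur_set \<sigma> x" using RsO by (simp add: cur_set_def)
  have sentE: "sent \<sigma>' = sent \<sigma>" and busyE: "busy \<sigma>' = busy \<sigma>" and retE: "ret \<sigma>' = ret \<sigma>"
    using \<sigma>' by auto
  have chanE: "\<And>a b. chan \<sigma>' a b = (if a = j \<and> b = i then tl (chan \<sigma> j i) else chan \<sigma> a b)"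
    using \<sigma>' by auto
  have msgsE: "\<And>x. msgs \<sigma>' x = msgs \<sigma> x"
  proof -
    fix x show "msgs \<sigma>' x = msgs \<sigma> x"
    proof (cases "x = i")
      case True then show ?thesis using msgs_butlast[OF neR[of i] RsI] sentE by simp
    next
      case False then show ?thesis using RsO sentE by (simp add: msgs_def)
    qed
  qed
  have finE: "\<And>x k. fin_st \<sigma>' x k = fin_st \<sigma> x k" using lenE busyE by (simp add: fin_st_def)
  have finI: "\<And>k. fin_st \<sigma> i k \<Longrightarrow> k < L - 1" using bz by (auto simp: fin_st_def L_def)
  have sameRs: "\<And>x k. fin_st \<sigma> x k \<Longrightarrow> Rs \<sigma>' x ! k = Rs \<sigma> x ! k"
    using finI nthI RsO by (metis)
  have i1: "inv1 \<sigma>'" unfolding inv1_def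
  proof
    fix x show "Rs \<sigma>' x \<noteq> []" using neR lenE by (metis length_0_conv)
  qed
  have i2: "inv2 n \<sigma>'" using InvD2[OF I] lenE unfolding inv2_def by auto
  have i3: "inv3 \<sigma>'" using InvD3[OF I] lenE sentE unfolding inv3_def by auto
  have i4: "inv4 n \<sigma>'" unfolding inv4_def
  proof (intro allI impI)
    fix x k e assume k: "k < length (Rs \<sigma>' x)" and e: "e \<in> Rs \<sigma>' x ! k"
    show "fst e \<in> {1..n} \<and> sent \<sigma>' (fst e) k = Some (snd e)"
    proof (cases "x = i \<and> k = L - 1")
      case True then show ?thesis using K2 e nthI2 sentE by auto
    next
      case False
      then have "Rs \<sigma>' x ! k = Rs \<sigma> x ! k" using k lenI nthI RsO by (cases "x = i") auto
      moreover have "k < length (Rs \<sigma> x)" using k lenE by metis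
      ultimately have "e \<in> Rs \<sigma> x ! k" "k < length (Rs \<sigma> x)" using e by simp_all
      then show ?thesis using InvD4[OF I] sentE by metis
    qed
  qed
  have i5: "inv5 tr \<sigma>'" using InvD5[OF I] finE sameRs unfolding inv5_def by simp
  have i6: "inv6 \<sigma>'" using InvD6[OF I] busyE lenE unfolding inv6_def by simp
  have i7: "inv7 n tr \<sigma>'" unfolding inv7_def
  proof (intro ballI allI)
    fix b y assume b: "b \<in> {1..n}"
    obtain d where d: "d \<le> length (msgs \<sigma> y)" "chan \<sigma> y b = drop d (msgs \<sigma> y)" "d \<le> length (Rs \<sigma> b)"
        "d = length (Rs \<sigma> b) \<Longrightarrow> busy \<sigma> b \<Longrightarrow> tr \<le> card (cur_set \<sigma> b)"
      using InvD7[OF I] b by blast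
    show "\<exists>c \<le> length (msgs \<sigma>' y). chan \<sigma>' y b = drop c (msgs \<sigma>' y) \<and> c \<le> length (Rs \<sigma>' b)
        \<and> (c = length (Rs \<sigma>' b) \<longrightarrow> busy \<sigma>' b \<longrightarrow> tr \<le> card (cur_set \<sigma>' b))"
    proof (cases "y = j \<and> b = i")
      case True
      have "chan \<sigma>' y b = drop (Suc c) (msgs \<sigma>' y)" using True chanE c(2) msgsE by (simp add: drop_Suc tl_drop)
      moreover have "Suc c \<le> length (msgs \<sigma>' y)" using True msgsE clt by simp
      moreover have "Suc c \<le> length (Rs \<sigma>' b)" using True lenI c(3) cL by simp
      moreover have "Suc c = length (Rs \<sigma>' b) \<longrightarrow> busy \<sigma>' b \<longrightarrow> tr \<le> card (cur_set \<sigma>' b)"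
        using True lenI K3 curI by simp
      ultimately show ?thesis by blast
    next
      case False
      have ch: "chan \<sigma>' y b = drop d (msgs \<sigma>' y)" using False chanE d(2) msgsE by auto
      have cnd: "d = length (Rs \<sigma>' b) \<longrightarrow> busy \<sigma>' b \<longrightarrow> tr \<le> card (cur_set \<sigma>' b)"
      proof (cases "b = i")
        case True
        have "tr \<le> card (cur_set \<sigma> b) \<Longrightarrow> tr \<le> card (cur_set \<sigma>' b)"
          using True curI K1 finnew card_mono cur_def by (metis le_trans)
        then show ?thesis using d(4) lenE busyE by simp
      next
        case False then show ?thesis using d(4) lenE busyE curO by simp
      qed
      show ?thesis using ch cnd d(1,3) msgsE lenE by (intro exI[of _ d]) auto
    qed
  qed
  have i8: "inv8 \<sigma>'" unfolding inv8_def using InvD8[OF I] retE finE by simp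
  have i9: "inv9 \<sigma>'" unfolding inv9_def
  proof (intro allI impI)
    fix x k R B assume r: "ret \<sigma>' x k = Some (R, B)"
    then have f0: "fin_st \<sigma> x k" using InvD8[OF I] retE by auto
    then show "R = snd ` (Rs \<sigma>' x ! k) \<and> B = {}" using InvD9[OF I] r retE sameRs by simp
  qed
  show ?thesis unfolding Inv_def using i1 i2 i3 i4 i5 i6 i7 i8 i9 by blast
qed


lemma inv_return:
  assumes I: "Inv n tr \<sigma>" and en: "ret_enabled n tr \<sigma> i"
  and \<sigma>': "\<sigma>' = \<sigma>\<lparr>busy := (busy \<sigma>)(i := False),
             ret := (ret \<sigma>)(i := (ret \<sigma> i)(cur_step \<sigma> i - 1 := Some (snd ` cur_set \<sigma> i, {})))\<rparr>"
  shows "Inv n tr \<sigma>'"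
proof -
  define L where "L = length (Rs \<sigma> i)"
  have bz: "busy \<sigma> i" and ge: "tr \<le> card (cur_set \<sigma> i)" using en by (auto simp: ret_enabled_def)
  have L2: "2 \<le> L" using InvD6[OF I] bz by (auto simp: L_def)
  have neR: "\<And>x. Rs \<sigma> x \<noteq> []" using InvD1[OF I] by blast
  have curL: "cur_set \<sigma> i = Rs \<sigma> i ! (L - 1)" using cur_set_nth[OF neR] by (simp add: L_def)
  have RsE: "Rs \<sigma>' = Rs \<sigma>" and sentE: "sent \<sigma>' = sent \<sigma>" and chanE: "chan \<sigma>' = chan \<sigma>"
    using \<sigma>' by auto
  have busyE: "\<And>x. busy \<sigma>' x = (x \<noteq> i \<and> busy \<sigma> x)" using \<sigma>' by auto
  have ret0: "ret \<sigma>' = (ret \<sigma>)(i := (ret \<sigma> i)(L - 1 := Some (snd ` cur_set \<sigma> i, {})))"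
    using \<sigma>' by (simp add: cur_step_def L_def)
  have retE: "\<And>x k. ret \<sigma>' x k = (if x = i \<and> k = L - 1 then Some (snd ` cur_set \<sigma> i, {}) else ret \<sigma> x k)"
    unfolding ret0 by simp
  have curE: "cur_set \<sigma>' = cur_set \<sigma>" using RsE by (simp add: cur_set_def fun_eq_iff)
  have msgsE: "\<And>x. msgs \<sigma>' x = msgs \<sigma> x" using RsE sentE by (simp add: msgs_def)
  have finE: "\<And>x k. fin_st \<sigma>' x k = (fin_st \<sigma> x k \<or> (x = i \<and> k = L - 1))"
  proof -
    fix x k show "fin_st \<sigma>' x k = (fin_st \<sigma> x k \<or> (x = i \<and> k = L - 1))"
    proof (cases "x = i")
      case True
      have b': "\<not> busy \<sigma>' i" using busyE by simp
      have A: "fin_st \<sigma>' i k = (1 \<le> k \<and> (Suc k < L \<or> Suc k = L))"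
        unfolding fin_st_def using b' RsE L_def by simp
      have B: "fin_st \<sigma> i k = (1 \<le> k \<and> Suc k < L)" unfolding fin_st_def using bz L_def by simp
      show ?thesis unfolding True A B using L2 by presburger
    next
      case False
      then show ?thesis using busyE RsE unfolding fin_st_def by simp
    qed
  qed
  have i1: "inv1 \<sigma>'" using InvD1[OF I] RsE unfolding inv1_def by simp
  have i2: "inv2 n \<sigma>'" using InvD2[OF I] RsE unfolding inv2_def by simp
  have i3: "inv3 \<sigma>'" using InvD3[OF I] RsE sentE unfolding inv3_def by simp
  have i4: "inv4 n \<sigma>'" using InvD4[OF I] RsE sentE unfolding inv4_def by simp
  have i5: "inv5 tr \<sigma>'" unfolding inv5_def
  proof (intro allI impI)
    fix x k assume "fin_st \<sigma>' x k"
    then have "fin_st \<sigma> x k \<or> (x = i \<and> k = L - 1)" using finE by blast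
    then show "tr \<le> card (Rs \<sigma>' x ! k)" using InvD5[OF I] RsE ge curL by auto
  qed
  have i6: "inv6 \<sigma>'" using InvD6[OF I] busyE RsE unfolding inv6_def by simp
  have i7: "inv7 n tr \<sigma>'" unfolding inv7_def
  proof (intro ballI allI)
    fix b y assume b: "b \<in> {1..n}"
    obtain d where d: "d \<le> length (msgs \<sigma> y)" "chan \<sigma> y b = drop d (msgs \<sigma> y)" "d \<le> length (Rs \<sigma> b)"
        "d = length (Rs \<sigma> b) \<Longrightarrow> busy \<sigma> b \<Longrightarrow> tr \<le> card (cur_set \<sigma> b)"
      using InvD7[OF I] b by blast
    show "\<exists>c \<le> length (msgs \<sigma>' y). chan \<sigma>' y b = drop c (msgs \<sigma>' y) \<and> c \<le> length (Rs \<sigma>' b)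
        \<and> (c = length (Rs \<sigma>' b) \<longrightarrow> busy \<sigma>' b \<longrightarrow> tr \<le> card (cur_set \<sigma>' b))"
    proof (intro exI[of _ d] conjI)
      show "d \<le> length (msgs \<sigma>' y)" using d(1) msgsE by simp
      show "chan \<sigma>' y b = drop d (msgs \<sigma>' y)" using d(2) msgsE chanE by simp
      show "d \<le> length (Rs \<sigma>' b)" using d(3) RsE by simp
      show "d = length (Rs \<sigma>' b) \<longrightarrow> busy \<sigma>' b \<longrightarrow> tr \<le> card (cur_set \<sigma>' b)"
        using d(4) RsE busyE curE by simp
    qed
  qed
  have i8: "inv8 \<sigma>'" unfolding inv8_def
  proof (intro allI)
    fix x k show "(ret \<sigma>' x k \<noteq> None) = fin_st \<sigma>' x k"
    proof (cases "x = i \<and> k = L - 1")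
      case True then show ?thesis using retE finE by simp
    next
      case False
      then have "ret \<sigma>' x k = ret \<sigma> x k" "fin_st \<sigma>' x k = fin_st \<sigma> x k" using retE finE by auto
      then show ?thesis using InvD8[OF I] by metis
    qed
  qed
  have i9: "inv9 \<sigma>'" unfolding inv9_def
  proof (intro allI impI)
    fix x k R B assume r: "ret \<sigma>' x k = Some (R, B)"
    show "R = snd ` (Rs \<sigma>' x ! k) \<and> B = {}"
    proof (cases "x = i \<and> k = L - 1")
      case True then show ?thesis using r retE RsE curL by auto
    next
      case False
      then have "ret \<sigma> x k = Some (R, B)" using r retE by auto
      then show ?thesis using RsE InvD9[OF I] by metis
    qed
  qed
  show ?thesis unfolding Inv_def using i1 i2 i3 i4 i5 i6 i7 i8 i9 by blast
qed

lemma inv_crash: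
  assumes I: "Inv n tr \<sigma>" and \<sigma>': "\<sigma>' = \<sigma>\<lparr>crashed := (crashed \<sigma>)(i := True)\<rparr>"
  shows "Inv n tr \<sigma>'"
proof -
  have msgsE: "\<And>x. msgs \<sigma>' x = msgs \<sigma> x" using \<sigma>' by (simp add: msgs_def)
  have finE: "\<And>x k. fin_st \<sigma>' x k = fin_st \<sigma> x k" using \<sigma>' by (simp add: fin_st_def)
  have curE: "cur_set \<sigma>' = cur_set \<sigma>" using \<sigma>' by (simp add: cur_set_def fun_eq_iff)
  have RsE: "Rs \<sigma>' = Rs \<sigma>" and sentE: "sent \<sigma>' = sent \<sigma>" and chanE: "chan \<sigma>' = chan \<sigma>"
    and busyE: "busy \<sigma>' = busy \<sigma>" and retE: "ret \<sigma>' = ret \<sigma>"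
    using \<sigma>' by auto
  have i1: "inv1 \<sigma>'" using InvD1[OF I] RsE unfolding inv1_def by simp
  have i2: "inv2 n \<sigma>'" using InvD2[OF I] RsE unfolding inv2_def by simp
  have i3: "inv3 \<sigma>'" using InvD3[OF I] RsE sentE unfolding inv3_def by simp
  have i4: "inv4 n \<sigma>'" using InvD4[OF I] RsE sentE unfolding inv4_def by simp
  have i5: "inv5 tr \<sigma>'" using InvD5[OF I] RsE finE unfolding inv5_def by simp
  have i6: "inv6 \<sigma>'" using InvD6[OF I] busyE RsE unfolding inv6_def by simp
  have i7: "inv7 n tr \<sigma>'" using InvD7[OF I] msgsE RsE chanE busyE curE unfolding inv7_def by simp
  have i8: "inv8 \<sigma>'" using InvD8[OF I] retE finE unfolding inv8_def by simp
  have i9: "inv9 \<sigma>'" using InvD9[OF I] retE RsE unfolding inv9_def by simp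
  show ?thesis unfolding Inv_def using i1 i2 i3 i4 i5 i6 i7 i8 i9 by blast
qed

lemma inv_trans:
  assumes I: "Inv n tr \<sigma>" and t: "trans n tr \<sigma> a \<sigma>'"
  shows "Inv n tr \<sigma>'"
proof (cases a)
  case (Invoke i m)
  then show ?thesis using t inv_invoke[OF I, of i m \<sigma>'] by simp
next
  case (Recv i j)
  then show ?thesis using t by (auto intro: inv_recv[OF I])
next
  case (Return i)
  then show ?thesis using t by (auto intro: inv_return[OF I])
next
  case (Crash i)
  then show ?thesis using t by (auto intro: inv_crash[OF I])
qed



definition rc :: "'m sys \<Rightarrow> nat \<Rightarrow> nat \<Rightarrow> nat" where
  "rc \<sigma> j i = length (msgs \<sigma> j) - length (chan \<sigma> j i)"

lemma invoke_fields:
  assumes "trans n tr \<sigma> (Invoke y m) \<sigma>'"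
  shows "Rs \<sigma>' = (Rs \<sigma>)(y := Rs \<sigma> y @ [{}])" "busy \<sigma>' = (busy \<sigma>)(y := True)"
    "crashed \<sigma>' = crashed \<sigma>" "ret \<sigma>' = ret \<sigma>" "sent \<sigma>' = (sent \<sigma>)(y := (sent \<sigma> y)(length (Rs \<sigma> y) := Some m))"
    "\<And>a b. length (chan \<sigma>' a b) = (if a = y \<and> b \<in> {1..n} then Suc (length (chan \<sigma> a b)) else length (chan \<sigma> a b))"
    "inv_enabled n \<sigma> y"
  using assms by (simp_all add: Let_def)

lemma recv_fields:
  assumes "trans n tr \<sigma> (Recv i j) \<sigma>'"
  shows "Rs \<sigma>' = (Rs \<sigma>)(i := butlast (Rs \<sigma> i) @ [process (cur_step \<sigma> i) (hd (chan \<sigma> j i)) (cur_set \<sigma> i)])"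
    "busy \<sigma>' = busy \<sigma>" "crashed \<sigma>' = crashed \<sigma>" "ret \<sigma>' = ret \<sigma>" "sent \<sigma>' = sent \<sigma>"
    "chan \<sigma>' = (chan \<sigma>)(j := (chan \<sigma> j)(i := tl (chan \<sigma> j i)))"
    "recv_enabled n tr \<sigma> i j"
  using assms by simp_all

lemma return_fields:
  assumes "trans n tr \<sigma> (Return i) \<sigma>'"
  shows "Rs \<sigma>' = Rs \<sigma>" "busy \<sigma>' = (busy \<sigma>)(i := False)" "crashed \<sigma>' = crashed \<sigma>" "sent \<sigma>' = sent \<sigma>"
    "chan \<sigma>' = chan \<sigma>" "ret_enabled n tr \<sigma> i"
    "ret \<sigma>' = (ret \<sigma>)(i := (ret \<sigma> i)(cur_step \<sigma> i - 1 := Some (snd ` cur_set \<sigma> i, {})))"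
  using assms by simp_all

lemma crash_fields:
  assumes "trans n tr \<sigma> (Crash i) \<sigma>'"
  shows "Rs \<sigma>' = Rs \<sigma>" "busy \<sigma>' = busy \<sigma>" "crashed \<sigma>' = (crashed \<sigma>)(i := True)" "sent \<sigma>' = sent \<sigma>"
    "chan \<sigma>' = chan \<sigma>" "ret \<sigma>' = ret \<sigma>"
  using assms by simp_all

lemma len_trans:
  assumes I: "Inv n tr \<sigma>" and t: "trans n tr \<sigma> a \<sigma>'"
  shows "length (Rs \<sigma>' x) = (if (\<exists>m. a = Invoke x m) then Suc (length (Rs \<sigma> x)) else length (Rs \<sigma> x))"
proof (cases a)
  case (Invoke y m) then show ?thesis using invoke_fields(1)[OF t[unfolded Invoke]] by auto
next
  case (Recv i j)
  have "Rs \<sigma> i \<noteq> []" using InvD1[OF I] by blast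
  then show ?thesis using recv_fields(1)[OF t[unfolded Recv]] Recv by auto
next
  case (Return i) then show ?thesis using return_fields(1)[OF t[unfolded Return]] by auto
next
  case (Crash i) then show ?thesis using crash_fields(1)[OF t[unfolded Crash]] by auto
qed

lemma busy_trans:
  assumes t: "trans n tr \<sigma> a \<sigma>'"
  shows "busy \<sigma>' x = (if (\<exists>m. a = Invoke x m) then True else if a = Return x then False else busy \<sigma> x)"
proof (cases a)
  case (Invoke y m) then show ?thesis using invoke_fields(2)[OF t[unfolded Invoke]] by auto
next
  case (Recv i j) then show ?thesis using recv_fields(2)[OF t[unfolded Recv]] by auto
next
  case (Return i) then show ?thesis using return_fields(2)[OF t[unfolded Return]] by auto
next
  case (Crash i) then show ?thesis using crash_fields(2)[OF t[unfolded Crash]] by auto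
qed

lemma crashed_trans:
  assumes t: "trans n tr \<sigma> a \<sigma>'" and "crashed \<sigma> x"
  shows "crashed \<sigma>' x"
proof (cases a)
  case (Invoke y m) then show ?thesis using invoke_fields(3)[OF t[unfolded Invoke]] assms(2) by auto
next
  case (Recv i j) then show ?thesis using recv_fields(3)[OF t[unfolded Recv]] assms(2) by auto
next
  case (Return i) then show ?thesis using return_fields(3)[OF t[unfolded Return]] assms(2) by auto
next
  case (Crash i) then show ?thesis using crash_fields(3)[OF t[unfolded Crash]] assms(2) by auto
qed

lemma sent_trans:
  assumes I: "Inv n tr \<sigma>" and t: "trans n tr \<sigma> a \<sigma>'" and s: "sent \<sigma> x k = Some v"
  shows "sent \<sigma>' x k = Some v"
proof (cases a)
  case (Invoke y m)
  have "sent \<sigma> y (length (Rs \<sigma> y)) = None" using InvD3[OF I] by (metis less_irrefl)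
  then show ?thesis using invoke_fields(5)[OF t[unfolded Invoke]] s by auto
next
  case (Recv i j) then show ?thesis using recv_fields(5)[OF t[unfolded Recv]] s by auto
next
  case (Return i) then show ?thesis using return_fields(4)[OF t[unfolded Return]] s by auto
next
  case (Crash i) then show ?thesis using crash_fields(4)[OF t[unfolded Crash]] s by auto
qed

lemma ret_trans:
  assumes t: "trans n tr \<sigma> a \<sigma>'" and s: "ret \<sigma> x k \<noteq> None"
  shows "ret \<sigma>' x k \<noteq> None"
proof (cases a)
  case (Invoke y m) then show ?thesis using invoke_fields(4)[OF t[unfolded Invoke]] s by auto
next
  case (Recv i j) then show ?thesis using recv_fields(4)[OF t[unfolded Recv]] s by auto
next
  case (Return i) then show ?thesis using return_fields(7)[OF t[unfolded Return]] s by auto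
next
  case (Crash i) then show ?thesis using crash_fields(6)[OF t[unfolded Crash]] s by auto
qed

lemma process_mono: "cur \<subseteq> process s msg cur"
  by (auto simp: process_def)

lemma cur_trans:
  assumes I: "Inv n tr \<sigma>" and t: "trans n tr \<sigma> a \<sigma>'" and l: "length (Rs \<sigma>' x) = length (Rs \<sigma> x)"
  shows "cur_set \<sigma> x \<subseteq> cur_set \<sigma>' x"
proof (cases a)
  case (Invoke y m)
  then have "x \<noteq> y" using len_trans[OF I t, of x] l by auto
  then show ?thesis using invoke_fields(1)[OF t[unfolded Invoke]] by (simp add: cur_set_def)
next
  case (Recv i j) then show ?thesis using recv_fields(1)[OF t[unfolded Recv]] process_mono
    by (auto simp: cur_set_def)
next
  case (Return i) then show ?thesis using return_fields(1)[OF t[unfolded Return]] by (simp add: cur_set_def)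
next
  case (Crash i) then show ?thesis using crash_fields(1)[OF t[unfolded Crash]] by (simp add: cur_set_def)
qed

lemma chan_le_msgs:
  assumes I: "Inv n tr \<sigma>" and i: "i \<in> {1..n}"
  shows "length (chan \<sigma> j i) \<le> length (msgs \<sigma> j)" "chan \<sigma> j i = drop (rc \<sigma> j i) (msgs \<sigma> j)"
    "rc \<sigma> j i \<le> length (Rs \<sigma> i)"
    "rc \<sigma> j i = length (Rs \<sigma> i) \<Longrightarrow> busy \<sigma> i \<Longrightarrow> tr \<le> card (cur_set \<sigma> i)"
proof -
  obtain c where c: "c \<le> length (msgs \<sigma> j)" "chan \<sigma> j i = drop c (msgs \<sigma> j)" "c \<le> length (Rs \<sigma> i)"
        "c = length (Rs \<sigma> i) \<Longrightarrow> busy \<sigma> i \<Longrightarrow> tr \<le> card (cur_set \<sigma> i)"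
    using InvD7[OF I] i by blast
  have rcc: "rc \<sigma> j i = c" using c(1,2) by (simp add: rc_def)
  show "length (chan \<sigma> j i) \<le> length (msgs \<sigma> j)" using c(2) by simp
  show "chan \<sigma> j i = drop (rc \<sigma> j i) (msgs \<sigma> j)" using c(2) rcc by simp
  show "rc \<sigma> j i \<le> length (Rs \<sigma> i)" using c(3) rcc by simp
  show "rc \<sigma> j i = length (Rs \<sigma> i) \<Longrightarrow> busy \<sigma> i \<Longrightarrow> tr \<le> card (cur_set \<sigma> i)" using c(4) rcc by simp
qed

lemma rc_trans:
  assumes I: "Inv n tr \<sigma>" and t: "trans n tr \<sigma> a \<sigma>'" and i: "i \<in> {1..n}"
  shows "rc \<sigma>' j i = rc \<sigma> j i + (if a = Recv i j then 1 else 0)"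
proof -
  have le: "length (chan \<sigma> j i) \<le> length (msgs \<sigma> j)" by (rule chan_le_msgs(1)[OF I i])
  have lm: "\<And>\<sigma>. length (msgs \<sigma> j) = length (Rs \<sigma> j) - 1" by (rule length_msgs)
  have ne: "Rs \<sigma> j \<noteq> []" using InvD1[OF I] by blast
  show ?thesis
  proof (cases a)
    case (Invoke y m)
    have l1: "length (Rs \<sigma>' j) = (if y = j then Suc (length (Rs \<sigma> j)) else length (Rs \<sigma> j))"
      using len_trans[OF I t, of j] Invoke by auto
    have l2: "length (chan \<sigma>' j i) = (if y = j then Suc (length (chan \<sigma> j i)) else length (chan \<sigma> j i))"
      using invoke_fields(6)[OF t[unfolded Invoke]] i by auto
    show ?thesis using l1 l2 le ne Invoke unfolding rc_def lm
      by (cases "Rs \<sigma> j") auto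
  next
    case (Recv a b)
    have l1: "length (Rs \<sigma>' j) = length (Rs \<sigma> j)" using len_trans[OF I t, of j] Recv by auto
    have ch: "chan \<sigma>' j i = (if j = b \<and> i = a then tl (chan \<sigma> j i) else chan \<sigma> j i)"
      using recv_fields(6)[OF t[unfolded Recv]] by auto
    have en: "recv_enabled n tr \<sigma> a b" using recv_fields(7)[OF t[unfolded Recv]] .
    show ?thesis
    proof (cases "j = b \<and> i = a")
      case True
      then have "chan \<sigma> j i \<noteq> []" using en by (simp add: recv_enabled_def)
      then have "length (chan \<sigma>' j i) = length (chan \<sigma> j i) - 1" "1 \<le> length (chan \<sigma> j i)"
        using ch True by (auto simp: Suc_le_eq)
      then show ?thesis using l1 le True Recv unfolding rc_def lm by auto
    next
      case False
      then show ?thesis using l1 ch Recv unfolding rc_def lm by auto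
    qed
  next
    case (Return x)
    then show ?thesis using return_fields(1,5)[OF t[unfolded Return]] unfolding rc_def lm by auto
  next
    case (Crash x)
    then show ?thesis using crash_fields(1,5)[OF t[unfolded Crash]] unfolding rc_def lm by auto
  qed
qed



locale run =
  fixes n tr :: nat and \<sigma> :: "nat \<Rightarrow> 'm sys" and act :: "nat \<Rightarrow> 'm act option"
  assumes ex: "tlcr_exec n tr \<sigma> act"
begin

lemma init: "\<sigma> 0 = init_sys" using ex by (simp add: tlcr_exec_def)

lemma stepN: "act t = None \<Longrightarrow> \<sigma> (Suc t) = \<sigma> t"
  using ex unfolding tlcr_exec_def by (metis option.simps(4))

lemma stepS: "act t = Some a \<Longrightarrow> trans n tr (\<sigma> t) a (\<sigma> (Suc t))"
  using ex unfolding tlcr_exec_def by (metis option.simps(5))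

lemma fairR: "\<exists>t\<ge>t0. \<not> recv_enabled n tr (\<sigma> t) i j \<or> act t = Some (Recv i j)"
  using ex unfolding tlcr_exec_def by blast

lemma fairRet: "\<exists>t\<ge>t0. \<not> ret_enabled n tr (\<sigma> t) i \<or> act t = Some (Return i)"
  using ex unfolding tlcr_exec_def by blast

lemma fairInv: "\<exists>t\<ge>t0. \<not> inv_enabled n (\<sigma> t) i \<or> (\<exists>m. act t = Some (Invoke i m))"
  using ex unfolding tlcr_exec_def by blast

lemma Inv_t: "Inv n tr (\<sigma> t)"
proof (induction t)
  case 0 then show ?case using init Inv_init by simp
next
  case (Suc t)
  show ?case
  proof (cases "act t")
    case None then show ?thesis using Suc stepN by simp
  next
    case (Some a) then show ?thesis using Suc stepS inv_trans by blast
  qed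
qed

abbreviation len :: "nat \<Rightarrow> nat \<Rightarrow> nat" where
  "len t x \<equiv> length (Rs (\<sigma> t) x)"

lemma len_step: "len (Suc t) x = (if \<exists>m. act t = Some (Invoke x m) then Suc (len t x) else len t x)"
proof (cases "act t")
  case None then show ?thesis using stepN by simp
next
  case (Some a) then show ?thesis using len_trans[OF Inv_t stepS[OF Some]] by simp
qed

lemma busy_step: "busy (\<sigma> (Suc t)) x = (if \<exists>m. act t = Some (Invoke x m) then True
    else if act t = Some (Return x) then False else busy (\<sigma> t) x)"
proof (cases "act t")
  case None then show ?thesis using stepN by simp
next
  case (Some a) then show ?thesis using busy_trans[OF stepS[OF Some]] by simp
qed

lemma rc_step: "i \<in> {1..n} \<Longrightarrow> rc (\<sigma> (Suc t)) j i = rc (\<sigma> t) j i + (if act t = Some (Recv i j) then 1 else 0)"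
proof (cases "act t")
  case None then show ?thesis using stepN by simp
next
  case (Some a)
  assume i: "i \<in> {1..n}"
  show ?thesis using rc_trans[OF Inv_t stepS[OF Some] i, of j] Some by simp
qed

lemma cur_step1: "len (Suc t) x = len t x \<Longrightarrow> cur_set (\<sigma> t) x \<subseteq> cur_set (\<sigma> (Suc t)) x"
proof (cases "act t")
  case None then show ?thesis using stepN by simp
next
  case (Some a)
  assume "len (Suc t) x = len t x"
  then show ?thesis using cur_trans[OF Inv_t stepS[OF Some]] by blast
qed

lemma len_mono: "t \<le> t' \<Longrightarrow> len t x \<le> len t' x"
  by (rule lift_Suc_mono_le[of "\<lambda>t. len t x"]) (simp_all add: len_step)

lemma rc_mono: "i \<in> {1..n} \<Longrightarrow> t \<le> t' \<Longrightarrow> rc (\<sigma> t) j i \<le> rc (\<sigma> t') j i"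
  by (rule lift_Suc_mono_le[of "\<lambda>t. rc (\<sigma> t) j i"]) (simp_all add: rc_step)

lemma crashed_step: "crashed (\<sigma> t) x \<Longrightarrow> crashed (\<sigma> (Suc t)) x"
proof (cases "act t")
  case None then show "crashed (\<sigma> t) x \<Longrightarrow> ?thesis" using stepN by simp
next
  case (Some a) then show "crashed (\<sigma> t) x \<Longrightarrow> ?thesis" using crashed_trans[OF stepS[OF Some]] by blast
qed

lemma sent_step: "sent (\<sigma> t) x k = Some v \<Longrightarrow> sent (\<sigma> (Suc t)) x k = Some v"
proof (cases "act t")
  case None then show "sent (\<sigma> t) x k = Some v \<Longrightarrow> ?thesis" using stepN by simp
next
  case (Some a) then show "sent (\<sigma> t) x k = Some v \<Longrightarrow> ?thesis" using sent_trans[OF Inv_t stepS[OF Some]] by blast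
qed

lemma sent_mono: "t \<le> t' \<Longrightarrow> sent (\<sigma> t) x k = Some v \<Longrightarrow> sent (\<sigma> t') x k = Some v"
proof (induction t' rule: dec_induct)
  case base then show ?case by simp
next
  case (step s) then show ?case using sent_step by blast
qed

lemma sent_unique: "sent (\<sigma> t1) x k = Some v1 \<Longrightarrow> sent (\<sigma> t2) x k = Some v2 \<Longrightarrow> v1 = v2"
proof -
  assume a: "sent (\<sigma> t1) x k = Some v1" and b: "sent (\<sigma> t2) x k = Some v2"
  have "sent (\<sigma> (max t1 t2)) x k = Some v1" "sent (\<sigma> (max t1 t2)) x k = Some v2"
    using sent_mono[OF _ a, of "max t1 t2"] sent_mono[OF _ b, of "max t1 t2"] by auto
  then show ?thesis by simp
qed

lemma cur_mono: "t \<le> t' \<Longrightarrow> len t x = len t' x \<Longrightarrow> cur_set (\<sigma> t) x \<subseteq> cur_set (\<sigma> t') x"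
proof (induction t' rule: dec_induct)
  case base then show ?case by simp
next
  case (step s)
  have "len t x \<le> len s x" "len s x \<le> len (Suc s) x" using len_mono step.hyps by auto
  then have e: "len s x = len t x" "len (Suc s) x = len s x" using step.prems by auto
  then have "cur_set (\<sigma> t) x \<subseteq> cur_set (\<sigma> s) x" using step.IH by simp
  then show ?case using cur_step1[OF e(2)] by (rule subset_trans)
qed

lemma notfails: "\<not> fails \<sigma> x \<Longrightarrow> \<not> crashed (\<sigma> t) x"
  by (auto simp: fails_def)

lemma len_pos: "1 \<le> len t x"
  using InvD1[OF Inv_t, of t] by (metis One_nat_def Suc_leI length_greater_0_conv)

end



context run
begin

lemma next_invoke:
  assumes x: "x \<in> {1..n}" and nf: "\<not> fails \<sigma> x"
    and d: "Suc k < len t x \<or> (Suc k = len t x \<and> \<not> busy (\<sigma> t) x)"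
  shows "\<exists>t'. Suc (Suc k) \<le> len t' x"
proof (rule ccontr)
  assume "\<not> ?thesis"
  then have H: "\<And>t'. len t' x \<le> Suc k" by (meson not_less_eq_eq)
  then have d2: "Suc k = len t x \<and> \<not> busy (\<sigma> t) x" using d by (meson leD)
  have all: "\<not> busy (\<sigma> (t + d)) x \<and> len (t + d) x = Suc k" for d
  proof (induction d)
    case 0 then show ?case using d2 by simp
  next
    case (Suc d)
    have ni: "\<not> (\<exists>m. act (t + d) = Some (Invoke x m))"
    proof
      assume "\<exists>m. act (t + d) = Some (Invoke x m)"
      then have "len (Suc (t + d)) x = Suc (Suc k)" using len_step Suc.IH by simp
      then show False using H[of "Suc (t + d)"] by simp
    qed
    then show ?case using Suc.IH len_step[of "t + d" x] busy_step[of "t + d" x] by auto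
  qed
  obtain s where s: "s \<ge> t" "\<not> inv_enabled n (\<sigma> s) x \<or> (\<exists>m. act s = Some (Invoke x m))"
    using fairInv by blast
  have "inv_enabled n (\<sigma> s) x" using all[of "s - t"] s(1) x notfails[OF nf]
    by (simp add: inv_enabled_def)
  then obtain m where "act s = Some (Invoke x m)" using s(2) by blast
  then have "len (Suc s) x = Suc (Suc k)" using len_step all[of "s - t"] s(1) by simp
  then show False using H[of "Suc s"] by simp
qed

lemma stuck:
  assumes x: "x \<in> {1..n}" and nf: "\<not> fails \<sigma> x" and K: "1 \<le> K" and r: "Suc K \<le> len t0 x"
    and nfin: "\<And>t. \<not> fin_st (\<sigma> t) x K"
  shows "\<And>t. t \<ge> t0 \<Longrightarrow> busy (\<sigma> t) x \<and> len t x = Suc K \<and> card (cur_set (\<sigma> t) x) < tr"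
proof -
  have A: "len t x \<le> Suc K \<and> (len t x = Suc K \<longrightarrow> busy (\<sigma> t) x)" for t
  proof -
    have "\<not> (Suc K < len t x \<or> Suc K = len t x \<and> \<not> busy (\<sigma> t) x)"
      using nfin[of t] K unfolding fin_st_def by blast
    then show ?thesis by auto
  qed
  have B: "\<And>t. t \<ge> t0 \<Longrightarrow> busy (\<sigma> t) x \<and> len t x = Suc K"
  proof -
    fix t assume "t \<ge> t0"
    then have "Suc K \<le> len t x" using r len_mono[of t0 t x] by simp
    then show "busy (\<sigma> t) x \<and> len t x = Suc K" using A[of t] by simp
  qed
  have C: "card (cur_set (\<sigma> t) x) < tr" if t: "t \<ge> t0" for t
  proof (rule ccontr)
    assume "\<not> card (cur_set (\<sigma> t) x) < tr"
    then have ge: "tr \<le> card (cur_set (\<sigma> t) x)" by simp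
    have en: "ret_enabled n tr (\<sigma> s) x" if s: "s \<ge> t" for s
    proof -
      have "len t x = len s x" using B[of t] B[of s] t s by simp
      then have "cur_set (\<sigma> t) x \<subseteq> cur_set (\<sigma> s) x" using cur_mono s by simp
      then have "card (cur_set (\<sigma> t) x) \<le> card (cur_set (\<sigma> s) x)"
        using Inv_finite_cur[OF Inv_t] card_mono by metis
      then show ?thesis using ge B[of s] s t x notfails[OF nf] by (simp add: ret_enabled_def)
    qed
    obtain s where s: "s \<ge> t" "\<not> ret_enabled n tr (\<sigma> s) x \<or> act s = Some (Return x)"
      using fairRet by blast
    then have a: "act s = Some (Return x)" using en by blast
    then have "\<not> busy (\<sigma> (Suc s)) x" "len (Suc s) x = Suc K"
      using busy_step[of s x] len_step[of s x] B[of s] s(1) t by auto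
    then have "fin_st (\<sigma> (Suc s)) x K" using K by (simp add: fin_st_def)
    then show False using nfin by blast
  qed
  fix t assume "t \<ge> t0"
  then show "busy (\<sigma> t) x \<and> len t x = Suc K \<and> card (cur_set (\<sigma> t) x) < tr" using B C by blast
qed

definition stuckP :: "nat \<Rightarrow> nat \<Rightarrow> nat \<Rightarrow> bool" where
  "stuckP i K T \<longleftrightarrow> i \<in> {1..n} \<and> \<not> fails \<sigma> i \<and>
     (\<forall>t\<ge>T. busy (\<sigma> t) i \<and> len t i = Suc K \<and> card (cur_set (\<sigma> t) i) < tr)"

lemma stuck_rc:
  assumes st: "stuckP i K T" and t: "t \<ge> T"
  shows "rc (\<sigma> t) j i \<le> K"
proof -
  have i: "i \<in> {1..n}" and S: "busy (\<sigma> t) i" "len t i = Suc K" "card (cur_set (\<sigma> t) i) < tr"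
    using st t by (auto simp: stuckP_def)
  have "rc (\<sigma> t) j i \<le> Suc K" using chan_le_msgs(3)[OF Inv_t i, of t j] S by simp
  moreover have "rc (\<sigma> t) j i \<noteq> Suc K" using chan_le_msgs(4)[OF Inv_t i, of t j] S by fastforce
  ultimately show ?thesis by simp
qed

lemma drain:
  assumes st: "stuckP i K T" and t0: "t0 \<ge> T" and ne: "\<And>t. t \<ge> t0 \<Longrightarrow> chan (\<sigma> t) j i \<noteq> []"
  shows False
proof -
  have i: "i \<in> {1..n}" and nf: "\<not> fails \<sigma> i" using st by (auto simp: stuckP_def)
  have grow: "\<exists>t\<ge>t0. d \<le> rc (\<sigma> t) j i" for d
  proof (induction d)
    case 0 then show ?case by auto
  next
    case (Suc d)
    then obtain t where t: "t \<ge> t0" "d \<le> rc (\<sigma> t) j i" by blast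
    obtain s where s: "s \<ge> t" "\<not> recv_enabled n tr (\<sigma> s) i j \<or> act s = Some (Recv i j)"
      using fairR by blast
    have "recv_enabled n tr (\<sigma> s) i j"
      using st s(1) t(1) t0 i notfails[OF nf] ne[of s] by (auto simp: stuckP_def recv_enabled_def)
    then have "act s = Some (Recv i j)" using s(2) by blast
    then have "rc (\<sigma> (Suc s)) j i = rc (\<sigma> s) j i + 1" using rc_step[OF i] by simp
    moreover have "rc (\<sigma> t) j i \<le> rc (\<sigma> s) j i" using rc_mono[OF i s(1)] .
    ultimately show ?case using t s(1) by (intro exI[of _ "Suc s"]) auto
  qed
  obtain t where "t \<ge> t0" "Suc K \<le> rc (\<sigma> t) j i" using grow by blast
  then show False using stuck_rc[OF st, of t j] t0 by simp
qed

lemma bounded: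
  assumes st: "stuckP i K T"
  shows "len t j \<le> Suc K"
proof (rule ccontr)
  assume "\<not> ?thesis"
  then have b: "Suc (Suc K) \<le> len t j" by simp
  have i: "i \<in> {1..n}" using st by (simp add: stuckP_def)
  have "chan (\<sigma> s) j i \<noteq> []" if s: "s \<ge> max T t" for s
  proof -
    have "Suc (Suc K) \<le> len s j" using b len_mono[of t s j] s by simp
    then have lm: "Suc K \<le> length (msgs (\<sigma> s) j)" by (simp add: length_msgs)
    have "rc (\<sigma> s) j i \<le> K" using stuck_rc[OF st] s by simp
    then have "drop (rc (\<sigma> s) j i) (msgs (\<sigma> s) j) \<noteq> []" using lm by simp
    then show ?thesis using chan_le_msgs(2)[OF Inv_t i] by metis
  qed
  then show False using drain[OF st, of "max T t" j] by simp
qed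

lemma emptied:
  assumes st: "stuckP i K T" and l: "\<And>t. t \<ge> t1 \<Longrightarrow> len t j = Suc K"
  shows "\<exists>t\<ge>max T t1. rc (\<sigma> t) j i = K"
proof -
  obtain t where t: "t \<ge> max T t1" "chan (\<sigma> t) j i = []"
    using drain[OF st, of "max T t1" j] by auto
  then have "rc (\<sigma> t) j i = K" using l[of t] by (simp add: rc_def length_msgs)
  then show ?thesis using t by blast
qed

lemma rc_ivt:
  assumes i: "i \<in> {1..n}"
  shows "ta \<le> tb \<Longrightarrow> rc (\<sigma> ta) j i \<le> v \<Longrightarrow> v < rc (\<sigma> tb) j i \<Longrightarrow>
    \<exists>t. ta \<le> t \<and> t < tb \<and> rc (\<sigma> t) j i = v \<and> act t = Some (Recv i j)"
proof (induction tb)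
  case 0 then show ?case by simp
next
  case (Suc tb)
  show ?case
  proof (cases "ta = Suc tb")
    case True then show ?thesis using Suc.prems by simp
  next
    case False
    then have le: "ta \<le> tb" using Suc.prems by simp
    show ?thesis
    proof (cases "v < rc (\<sigma> tb) j i")
      case True
      then obtain t where "ta \<le> t \<and> t < tb \<and> rc (\<sigma> t) j i = v \<and> act t = Some (Recv i j)"
        using Suc.IH le Suc.prems(2) by blast
      then show ?thesis by (intro exI[of _ t]) auto
    next
      case False
      have rs: "rc (\<sigma> (Suc tb)) j i = rc (\<sigma> tb) j i + (if act tb = Some (Recv i j) then 1 else 0)"
        using rc_step[OF i] .
      have a: "act tb = Some (Recv i j)"
      proof (rule ccontr)
        assume "act tb \<noteq> Some (Recv i j)"
        then show False using rs False Suc.prems(3) by simp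
      qed
      then have "rc (\<sigma> tb) j i = v" using rs False Suc.prems(3) by simp
      then show ?thesis using a le by (intro exI[of _ tb]) auto
    qed
  qed
qed

end



context run
begin

lemma len0: "len 0 x = 1" and busy0: "\<not> busy (\<sigma> 0) x"
  using init by (simp_all add: init_sys_def)

lemma main:
  assumes C_def: "C = {i \<in> {1..n}. \<not> fails \<sigma> i}"
    and trC: "tr \<le> card C" and K: "1 \<le> K" and reach: "\<And>j. j \<in> C \<Longrightarrow> \<exists>t. Suc K \<le> len t j"
  shows "\<forall>i\<in>C. \<exists>t. fin_st (\<sigma> t) i K"
proof (rule ccontr)
  assume "\<not> ?thesis"
  then obtain i where iC: "i \<in> C" and nfi: "\<And>t. \<not> fin_st (\<sigma> t) i K" by blast
  have Cn: "\<And>j. j \<in> C \<Longrightarrow> j \<in> {1..n}" and Cf: "\<And>j. j \<in> C \<Longrightarrow> \<not> fails \<sigma> j"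
    using C_def by auto
  have finC: "finite C" using C_def by simp
  obtain ti where ti: "Suc K \<le> len ti i" using reach[OF iC] by blast
  have st_i: "stuckP i K ti"
    using stuck[OF Cn[OF iC] Cf[OF iC] K ti nfi] Cn[OF iC] Cf[OF iC] by (simp add: stuckP_def)
  have bnd: "\<And>t j. len t j \<le> Suc K" using bounded[OF st_i] .
  have nfall: "\<And>j t. j \<in> C \<Longrightarrow> \<not> fin_st (\<sigma> t) j K"
  proof
    fix j t assume jC: "j \<in> C" and f: "fin_st (\<sigma> t) j K"
    then have "Suc K < len t j \<or> (Suc K = len t j \<and> \<not> busy (\<sigma> t) j)" by (simp add: fin_st_def)
    then obtain t' where "Suc (Suc K) \<le> len t' j" using next_invoke[OF Cn[OF jC] Cf[OF jC]] by blast
    then show False using bnd[of t' j] by simp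
  qed
  define E where "E j = (LEAST t. Suc K \<le> len t j)" for j
  have E1: "\<And>j. j \<in> C \<Longrightarrow> Suc K \<le> len (E j) j"
    unfolding E_def using reach by (metis LeastI_ex)
  have E2: "\<And>j t. t < E j \<Longrightarrow> \<not> Suc K \<le> len t j"
    unfolding E_def by (rule not_less_Least)
  obtain i0 where i0: "i0 \<in> C" "\<And>y. y \<in> C \<Longrightarrow> E i0 \<le> E y"
    using ex_has_least_nat[of "\<lambda>j. j \<in> C" i E] iC by blast
  have i0n: "i0 \<in> {1..n}" using Cn[OF i0(1)] .
  define T0 where "T0 = E i0"
  have st0: "stuckP i0 K T0"
    using stuck[OF i0n Cf[OF i0(1)] K E1[OF i0(1)] nfall[OF i0(1)]] i0n Cf[OF i0(1)]
    by (simp add: stuckP_def T0_def)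
  have S0: "\<And>t. t \<ge> T0 \<Longrightarrow> busy (\<sigma> t) i0 \<and> len t i0 = Suc K \<and> card (cur_set (\<sigma> t) i0) < tr"
    using st0 by (simp add: stuckP_def)
  have T0pos: "0 < T0"
  proof (rule ccontr)
    assume "\<not> 0 < T0"
    then have "T0 = 0" by simp
    then show False using E1[OF i0(1)] len0 K unfolding T0_def by simp
  qed
  have actT0: "\<exists>m. act (T0 - 1) = Some (Invoke i0 m)"
  proof (rule ccontr)
    assume na: "\<not> ?thesis"
    have "len (Suc (T0 - 1)) i0 = len (T0 - 1) i0" using len_step[of "T0 - 1" i0] na by simp
    moreover have "Suc (T0 - 1) = T0" using T0pos by simp
    moreover have "\<not> Suc K \<le> len (T0 - 1) i0" using E2[of "T0 - 1" i0] T0pos unfolding T0_def by simp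
    ultimately show False using S0[of T0] by simp
  qed
  have mem: "\<exists>tj. \<forall>t\<ge>tj. j \<in> fst ` cur_set (\<sigma> t) i0" if jC: "j \<in> C" for j
  proof -
    have lj: "len (T0 - 1) j \<le> K"
    proof -
      have "T0 - 1 < E j" using i0(2)[OF jC] T0pos unfolding T0_def by simp
      then show ?thesis using E2[of "T0 - 1" j] by simp
    qed
    have rc0: "rc (\<sigma> (T0 - 1)) j i0 \<le> K - 1"
      using lj by (simp add: rc_def length_msgs)
    have stj: "\<And>t. t \<ge> E j \<Longrightarrow> len t j = Suc K"
      using E1[OF jC] len_mono bnd by (meson le_antisym le_trans)
    obtain t3 where t3: "t3 \<ge> max T0 (E j)" "rc (\<sigma> t3) j i0 = K"
      using emptied[OF st0 stj] by blast
    obtain t4 where t4: "T0 - 1 \<le> t4" "t4 < t3" "rc (\<sigma> t4) j i0 = K - 1" "act t4 = Some (Recv i0 j)"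
    proof -
      have a: "T0 - 1 \<le> t3" using t3(1) by (simp only: max.bounded_iff) arith
      have b: "K - 1 < rc (\<sigma> t3) j i0" using t3(2) K by simp
      show ?thesis using rc_ivt[OF i0n a rc0 b] that by blast
    qed
    have "t4 \<noteq> T0 - 1" using actT0 t4(4) by auto
    then have t4T: "t4 \<ge> T0" using t4(1) by simp
    have S: "len t4 i0 = Suc K" using S0[OF t4T] by simp
    have tr4: "trans n tr (\<sigma> t4) (Recv i0 j) (\<sigma> (Suc t4))" using stepS[OF t4(4)] .
    have curS: "cur_set (\<sigma> (Suc t4)) i0 = process (cur_step (\<sigma> t4) i0) (hd (chan (\<sigma> t4) j i0)) (cur_set (\<sigma> t4) i0)"
      using recv_fields(1)[OF tr4] by (simp add: cur_set_def)
    have ne: "chan (\<sigma> t4) j i0 \<noteq> []" using recv_fields(7)[OF tr4] by (simp add: recv_enabled_def)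
    have ch: "chan (\<sigma> t4) j i0 = drop (K - 1) (msgs (\<sigma> t4) j)"
      using chan_le_msgs(2)[OF Inv_t i0n, of t4 j] t4(3) by simp
    have klt: "K - 1 < length (msgs (\<sigma> t4) j)"
    proof (rule ccontr)
      assume "\<not> ?thesis"
      then show False using ne ch by simp
    qed
    have hd: "hd (chan (\<sigma> t4) j i0) = Msg j (the (sent (\<sigma> t4) j K)) (Suc K) (Rs (\<sigma> t4) j ! (K - 1))"
      using ch klt nth_msgs[OF klt] K by (simp add: hd_drop_conv_nth)
    have "(j, the (sent (\<sigma> t4) j K)) \<in> cur_set (\<sigma> (Suc t4)) i0"
      using curS hd S by (simp add: process_def cur_step_def)
    then have inS: "j \<in> fst ` cur_set (\<sigma> (Suc t4)) i0" by (metis fst_conv image_eqI)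
    have "\<forall>t\<ge>Suc t4. j \<in> fst ` cur_set (\<sigma> t) i0"
    proof (intro allI impI)
      fix t assume t: "Suc t4 \<le> t"
      have "len (Suc t4) i0 = len t i0" using S0[of "Suc t4"] S0[of t] t t4T by simp
      then have "cur_set (\<sigma> (Suc t4)) i0 \<subseteq> cur_set (\<sigma> t) i0" using cur_mono t by simp
      then show "j \<in> fst ` cur_set (\<sigma> t) i0" using inS by blast
    qed
    then show ?thesis by blast
  qed
  then have "\<forall>j\<in>C. \<exists>tj. \<forall>t\<ge>tj. j \<in> fst ` cur_set (\<sigma> t) i0" by blast
  then obtain g where g: "\<And>j t. j \<in> C \<Longrightarrow> t \<ge> g j \<Longrightarrow> j \<in> fst ` cur_set (\<sigma> t) i0"
    by (metis bchoice)
  define T' where "T' = T0 + sum g C"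
  have sub: "C \<subseteq> fst ` cur_set (\<sigma> T') i0"
  proof
    fix j assume jC: "j \<in> C"
    have "g j \<le> sum g C" using member_le_sum[of j C g] jC finC by simp
    then show "j \<in> fst ` cur_set (\<sigma> T') i0" using g[OF jC] unfolding T'_def by simp
  qed
  have fin: "finite (cur_set (\<sigma> T') i0)" using Inv_finite_cur[OF Inv_t] .
  have "card C \<le> card (fst ` cur_set (\<sigma> T') i0)" using sub fin by (simp add: card_mono)
  also have "\<dots> \<le> card (cur_set (\<sigma> T') i0)" using fin by (rule card_image_le)
  also have "\<dots> < tr" using S0[of T'] unfolding T'_def by simp
  finally show False using trC by simp
qed

lemma reach:
  assumes C_def: "C = {i \<in> {1..n}. \<not> fails \<sigma> i}" and trC: "tr \<le> card C"
  shows "\<forall>j\<in>C. \<exists>t. Suc K \<le> len t j"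
proof (induction K)
  case 0 then show ?case using len_pos by auto
next
  case (Suc K)
  show ?case
  proof
    fix j assume jC: "j \<in> C"
    have jn: "j \<in> {1..n}" and nf: "\<not> fails \<sigma> j" using jC C_def by auto
    show "\<exists>t. Suc (Suc K) \<le> len t j"
    proof (cases "K = 0")
      case True
      then show ?thesis using next_invoke[OF jn nf, of 0 0] len0 busy0 by simp
    next
      case False
      then have "\<forall>i\<in>C. \<exists>t. fin_st (\<sigma> t) i K" using main[OF C_def trC, of K] Suc.IH by auto
      then obtain t where "fin_st (\<sigma> t) j K" using jC by blast
      then have "Suc K < len t j \<or> (Suc K = len t j \<and> \<not> busy (\<sigma> t) j)" by (simp add: fin_st_def)
      then show ?thesis using next_invoke[OF jn nf] by blast
    qed
  qed
qed

end

theorem theorem2: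
  fixes n tr f :: nat and \<sigma> :: "nat \<Rightarrow> 'm sys" and act :: "nat \<Rightarrow> 'm act option"
  assumes "tr \<le> n"
    and "f \<le> n - tr"
    and "card {i \<in> {1..n}. fails \<sigma> i} \<le> f"
    and "tlcr_exec n tr \<sigma> act"
  shows "TSB n tr 0 0 (invoked \<sigma>) (bcast \<sigma>) (returned \<sigma>) (fails \<sigma>)"
proof -
  interpret run n tr \<sigma> act by (rule run.intro[OF assms(4)])
  define C where "C = {i \<in> {1..n}. \<not> fails \<sigma> i}"
  define F where "F = {i \<in> {1..n}. fails \<sigma> i}"
  have CF: "C = {1..n} - F" unfolding C_def F_def by auto
  have "card C = n - card F" unfolding CF by (subst card_Diff_subset) (auto simp: F_def)
  then have trC: "tr \<le> card C" using assms(1,2,3) unfolding F_def by linarith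
  have lock: "\<forall>i\<in>{1..n}. \<forall>k. invoked \<sigma> i k \<longrightarrow> fails \<sigma> i \<or> (\<exists>R B. returned \<sigma> i k R B)"
  proof (intro ballI allI impI)
    fix i k assume i: "i \<in> {1..n}" and iv: "invoked \<sigma> i k"
    show "fails \<sigma> i \<or> (\<exists>R B. returned \<sigma> i k R B)"
    proof (cases "fails \<sigma> i")
      case True then show ?thesis by simp
    next
      case False
      then have iC: "i \<in> C" using i C_def by simp
      obtain t0 where "sent (\<sigma> t0) i k \<noteq> None" using iv by (auto simp: invoked_def)
      then have k1: "1 \<le> k" using InvD3[OF Inv_t, of t0] by blast
      show ?thesis
      proof (cases "k = 0")
        case True then show ?thesis using k1 by simp
      next
        case False
        have "\<forall>i\<in>C. \<exists>t. fin_st (\<sigma> t) i k" using main[OF C_def trC k1] reach[OF C_def trC] by blast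
        then obtain t where "fin_st (\<sigma> t) i k" using iC by blast
        then have "ret (\<sigma> t) i k \<noteq> None" using InvD8[OF Inv_t, of t] by blast
        then obtain R B where "ret (\<sigma> t) i k = Some (R, B)" by auto
        then show ?thesis by (auto simp: returned_def)
      qed
    qed
  qed
  have recv: "\<forall>i k R B. returned \<sigma> i k R B \<longrightarrow>
        (\<exists>N \<subseteq> {1..n}. tr \<le> card N \<and> (\<forall>j\<in>N. \<exists>m. bcast \<sigma> j k m) \<and> R = {m. \<exists>j\<in>N. bcast \<sigma> j k m})"
  proof (intro allI impI)
    fix i k R B assume "returned \<sigma> i k R B"
    then obtain t where r: "ret (\<sigma> t) i k = Some (R, B)" by (auto simp: returned_def)
    define S where "S = Rs (\<sigma> t) i ! k"
    have fs: "fin_st (\<sigma> t) i k" using r InvD8[OF Inv_t, of t] by blast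
    then have klt: "k < len t i" by (auto simp: fin_st_def)
    have RS: "R = snd ` S" using r InvD9[OF Inv_t, of t] unfolding S_def by blast
    have el: "\<And>x. x \<in> S \<Longrightarrow> fst x \<in> {1..n} \<and> sent (\<sigma> t) (fst x) k = Some (snd x)"
      using InvD4[OF Inv_t, of t] klt unfolding S_def by blast
    have cS: "tr \<le> card S" using InvD5[OF Inv_t, of t] fs unfolding S_def by blast
    have inj: "inj_on fst S"
    proof (rule inj_onI)
      fix x y assume "x \<in> S" "y \<in> S" "fst x = fst y"
      then have "snd x = snd y" using el[of x] el[of y] by simp
      then show "x = y" using \<open>fst x = fst y\<close> by (simp add: prod_eq_iff)
    qed
    show "\<exists>N \<subseteq> {1..n}. tr \<le> card N \<and> (\<forall>j\<in>N. \<exists>m. bcast \<sigma> j k m) \<and> R = {m. \<exists>j\<in>N. bcast \<sigma> j k m}"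
    proof (intro exI[of _ "fst ` S"] conjI)
      show "fst ` S \<subseteq> {1..n}" using el by auto
      show "tr \<le> card (fst ` S)" using cS card_image[OF inj] by simp
      show "\<forall>j\<in>fst ` S. \<exists>m. bcast \<sigma> j k m"
      proof
        fix j assume "j \<in> fst ` S"
        then obtain x where "x \<in> S" "j = fst x" by blast
        then show "\<exists>m. bcast \<sigma> j k m" using el[of x] by (auto simp: bcast_def)
      qed
      show "R = {m. \<exists>j\<in>fst ` S. bcast \<sigma> j k m}"
      proof
        show "R \<subseteq> {m. \<exists>j\<in>fst ` S. bcast \<sigma> j k m}"
        proof
          fix m assume "m \<in> R"
          then obtain x where x: "x \<in> S" "m = snd x" using RS by blast
          then show "m \<in> {m. \<exists>j\<in>fst ` S. bcast \<sigma> j k m}" using el[of x] by (auto simp: bcast_def)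
        qed
        show "{m. \<exists>j\<in>fst ` S. bcast \<sigma> j k m} \<subseteq> R"
        proof
          fix m assume "m \<in> {m. \<exists>j\<in>fst ` S. bcast \<sigma> j k m}"
          then obtain x t' where x: "x \<in> S" "sent (\<sigma> t') (fst x) k = Some m" by (auto simp: bcast_def)
          then have "m = snd x" using el[of x] sent_unique by blast
          then show "m \<in> R" using RS x by blast
        qed
      qed
    qed
  qed
  have bc: "\<forall>k. \<exists>N \<subseteq> {1..n}. 0 \<le> card N \<and> (\<forall>j\<in>N. \<exists>m. bcast \<sigma> j k m) \<and>
        (\<forall>i R B. returned \<sigma> i k R B \<longrightarrow> B = {m. \<exists>j\<in>N. bcast \<sigma> j k m})"
  proof
    fix k
    have "\<forall>i R B. returned \<sigma> i k R B \<longrightarrow> B = {}"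
    proof (intro allI impI)
      fix i R B assume "returned \<sigma> i k R B"
      then obtain t where r: "ret (\<sigma> t) i k = Some (R, B)" by (auto simp: returned_def)
      then show "B = {}" using InvD9[OF Inv_t, of t] by blast
    qed
    then show "\<exists>N \<subseteq> {1..n}. 0 \<le> card N \<and> (\<forall>j\<in>N. \<exists>m. bcast \<sigma> j k m) \<and>
        (\<forall>i R B. returned \<sigma> i k R B \<longrightarrow> B = {m. \<exists>j\<in>N. bcast \<sigma> j k m})"
      by (intro exI[of _ "{}"]) auto
  qed
  show ?thesis unfolding TSB_def using lock recv bc by simp
qed


end
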